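(* Let $\tau$ be a state on the $Q$-MCR algebra $\mathbb A$ satisfying the continuity assumption in the context. Then: (i) The functionals $\mathbf S^{(m,n)}(\varphi_1\otimes g_1,\dots,\varphi_{m+n}\otimes g_{m+n}):=\tau\big(A^+(\varphi_1\otimes g_1)\cdots A^+(\varphi_m\otimes g_m)A^-(\varphi_{m+1}\otimes g_{m+1})\cdots A^-(\varphi_{m+n}\otimes g_{m+n})\big)$, for $m,n\ge0$, $m+n\ge1$, $\varphi_i\in C_0(Y;V)$, $g_i\in\mathcal G$, uniquely determine $\tau$. (ii) The functionals $\mathbf M^{(n)}(\varphi_1\otimes g_1,\dots,\varphi_n\otimes g_n):=\tau\big(B(\varphi_1\otimes g_1)\cdots B(\varphi_n\otimes g_n)\big)$, for $n\ge1$, $\varphi_i\in C_0(Y;V_{\mathbb R})$, $g_i\in\mathcal G$, uniquely determine $\tau$, where $V_{\mathbb R}:=\mathbb R^r\subset\mathbb C^r=V$. (Here "uniquely determine" means: two states satisfying the continuity assumption with the same functionals coincide.)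
   Context: Setting: $d\ge2$, $X=\mathbb R^d\ni x=(y,z)$, $y\in Y:=\mathbb R$, $z\in Z:=\mathbb R^{d-1}$; $V=\mathbb C^r$, standard basis $e_i$, $J$ complex conjugation, $\langle u,v\rangle=(u,Jv)$. $Q:Y^2\to\mathcal L(V^{\otimes2})$ continuous, unitary-valued, $Q(y_1,y_2)^*=Q(y_2,y_1)$, satisfying the functional Yang–Baxter equation $Q_1(y_1,y_2)Q_2(y_1,y_3)Q_1(y_2,y_3)=Q_2(y_2,y_3)Q_1(y_1,y_3)Q_2(y_1,y_2)$ ($C_i$ = $C$ acting on factors $i,i+1$). $Q(x_1,x_2):=Q(y_1,y_2)$, $\mathbb S^{(n)}(v_1\otimes\cdots\otimes v_n)=Jv_n\otimes\cdots\otimes Jv_1$, $\widehat Q(x_1,x_2)=\mathbb S^{(2)}Q(x_2,x_1)\mathbb S^{(2)}$, $\langle\widetilde Q(x_1,x_2)e_i\otimes e_j,e_k\otimes e_l\rangle=\langle Q(x_1,x_2)e_k\otimes e_i,e_l\otimes e_j\rangle$, $\operatorname{Tr}(v)=\sum_k(v,e_k\otimes e_k)$, $\operatorname{Tr}_i$ on factors $i,i+1$. $\mathcal G=L^2(Z)$, $\mathfrak F^{(n)}$ = span of $\varphi(y_1..y_n)g_1(z_1)\cdots g_n(z_n)$, $\varphi\in C_0(Y^n;V^{\otimes n})$, $g_i\in\mathcal G$. $\mathbb A$ (the $Q$-MCR algebra) is the unital $*$-algebra spanned by $\mathbf 1$ and $\Phi(f^{(n)};\sharp_1..\sharp_n)$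 ($f^{(n)}\in\mathfrak F^{(n)}$, linear in $f^{(n)}$), with product by tensoring kernels and concatenating signs, involution $\Phi(f;\sharp_1..\sharp_n)^*=\Phi(\mathbb S^{(n)}f(x_n..x_1);-\sharp_n..-\sharp_1)$, and relations: $\sharp_i=\sharp_{i+1}=+$: $\Phi(f;\sharp)=\Phi(Q_i(x_i,x_{i+1})f(..,x_{i+1},x_i,..);\sharp)$; $\sharp_i=\sharp_{i+1}=-$: same with $\widehat Q_i(x_i,x_{i+1})$; $\sharp_i=-,\sharp_{i+1}=+$: $\Phi(f;\sharp)=\Phi(\widetilde Q_i(x_{i+1},x_i)f(..,x_{i+1},x_i,..);\sharp\text{ with }\sharp_i,\sharp_{i+1}\text{ swapped})+\Phi(g;\sharp\text{ with }\sharp_i,\sharp_{i+1}\text{ removed})$, $g(x_1..x_{n-2})=\int_X\operatorname{Tr}_if(x_1,..,x_{i-1},x,x,x_i,..,x_{n-2})dx$. For $f\in\mathfrak F^{(1)}$: $A^\sharp(f):=\Phi(f;\sharp)$, $B(f):=A^+(f)+A^-(Jf)$; $(\varphi\otimes g)(x):=\varphi(y)g(z)$. A state is a linear $\tau:\mathbb A\to\mathbb C$ with $\tau(\mathbf 1)=1$, $\tau(a^*a)\ge0$. Continuity assumption: $C_0(Y^n;V^{\otimes n})$ carries the topology in which $f_k\to f$ iff all supports lie in a common compact set and convergence is uniform; for all signs $\sharp_1..\sharp_n$ and fixed $g_1..g_n\in\mathcal G$, the functional $\varphi\mapsto\tau\big(\Phi(\varphi(y_1..y_n)g_1(z_1)\cdots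 g_n(z_n);\sharp_1..\sharp_n)\big)$ is continuous on $C_0(Y^n;V^{\otimes n})$. *)

theory Defs
  imports "HOL-Analysis.Analysis"
begin

text \<open>Points x = (y,z) of X = Y \<times> Z with Y = real and Z a Euclidean space of
dimension d-1 \<ge> 1 (the type variable 'z).  A vector of V^{\<otimes>n}, V = C^r, is given by
its components, indexed by multi-indices (lists of length n with entries < r).
A kernel f : X^n \<rightarrow> V^{\<otimes>n} is a function of a list of n points and a multi-index.
A 2-site operator (element of L(V^{\<otimes>2})) is given by its matrix entries M i j k l,
i.e. (M v)_{ij} = sum_{k,l} M i j k l * v_{kl}.\<close>

type_synonym vec = "nat list \<Rightarrow> complex"
type_synonym op2 = "nat \<Rightarrow> nat \<Rightarrow> nat \<Rightarrow> nat \<Rightarrow> complex"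
type_synonym 'z kernel = "(real \<times> 'z) list \<Rightarrow> vec"
type_synonym 'z mterm = "bool list \<times> 'z kernel"
  (* signs: True = +, False = - ; the term Phi(f; signs) *)

definition mi :: "nat \<Rightarrow> nat \<Rightarrow> nat list \<Rightarrow> bool" where
  "mi r n is \<longleftrightarrow> length is = n \<and> (\<forall>k\<in>set is. k < r)"

text \<open>C_0(Y^n; V^{\<otimes>n}) (continuous, compactly supported).  Continuity on R^n is
expressed through the coordinate map from the product space nat \<Rightarrow> real.\<close>
definition Cc :: "nat \<Rightarrow> nat \<Rightarrow> (real list \<Rightarrow> vec) \<Rightarrow> bool" where
  "Cc r n \<phi> \<longleftrightarrow> (\<forall>is. mi r n is \<longrightarrow>
      continuous_on UNIV (\<lambda>v::nat \<Rightarrow> real. \<phi> (map v [0..<n]) is) \<and>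
      (\<exists>C. \<forall>ys. length ys = n \<longrightarrow> (\<exists>y\<in>set ys. C < \<bar>y\<bar>) \<longrightarrow> \<phi> ys is = 0))"

definition Cc1 :: "nat \<Rightarrow> (real \<Rightarrow> nat \<Rightarrow> complex) \<Rightarrow> bool" where
  "Cc1 r \<phi> \<longleftrightarrow> (\<forall>k<r. continuous_on UNIV (\<lambda>y. \<phi> y k) \<and>
      (\<exists>C. \<forall>y. C < \<bar>y\<bar> \<longrightarrow> \<phi> y k = 0))"

definition Cc1_real :: "nat \<Rightarrow> (real \<Rightarrow> nat \<Rightarrow> complex) \<Rightarrow> bool" where
  "Cc1_real r \<phi> \<longleftrightarrow> Cc1 r \<phi> \<and> (\<forall>y. \<forall>k<r. Im (\<phi> y k) = 0)"

text \<open>G = L^2(Z) (square integrable functions; classes are handled by the a.e.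
invariance required of states below).\<close>
definition L2 :: "('z::euclidean_space \<Rightarrow> complex) \<Rightarrow> bool" where
  "L2 g \<longleftrightarrow> g \<in> borel_measurable lborel \<and> integrable lborel (\<lambda>z. (cmod (g z))\<^sup>2)"

definition prodker :: "(real list \<Rightarrow> vec) \<Rightarrow> ('z \<Rightarrow> complex) list \<Rightarrow> 'z kernel" where
  "prodker \<phi> gs = (\<lambda>xs is. \<phi> (map fst xs) is * (\<Prod>k<length gs. (gs ! k) (snd (xs ! k))))"

definition Fsp :: "nat \<Rightarrow> nat \<Rightarrow> ('z::euclidean_space) kernel set" where
  "Fsp r n = {f. \<exists>ps. (\<forall>p\<in>set ps. Cc r n (fst p) \<and> length (snd p) = n \<and> (\<forall>g\<in>set (snd p). L2 g))
                  \<and> f = (\<lambda>xs is. \<Sum>p\<leftarrow>ps. prodker (fst p) (snd p) xs is)}"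

definition ker1 :: "(real \<Rightarrow> nat \<Rightarrow> complex) \<Rightarrow> ('z \<Rightarrow> complex) \<Rightarrow> 'z kernel" where
  "ker1 \<phi> g = (\<lambda>xs is. \<phi> (fst (xs ! 0)) (is ! 0) * g (snd (xs ! 0)))"

text \<open>Operator with entries M acting on sites i, i+1 (0-indexed) of V^{\<otimes>n}.\<close>
definition op_at :: "nat \<Rightarrow> nat \<Rightarrow> op2 \<Rightarrow> vec \<Rightarrow> vec" where
  "op_at r i M v = (\<lambda>is. \<Sum>k<r. \<Sum>l<r. M (is ! i) (is ! Suc i) k l * v (is[i := k, Suc i := l]))"

definition lswap :: "nat \<Rightarrow> 'a list \<Rightarrow> 'a list" where
  "lswap i xs = xs[i := xs ! Suc i, Suc i := xs ! i]"

text \<open>S^{(n)}(v_1 \<otimes> ... \<otimes> v_n) = J v_n \<otimes> ... \<otimes> J v_1\<close>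
definition Sflip :: "vec \<Rightarrow> vec" where
  "Sflip v = (\<lambda>is. cnj (v (rev is)))"

definition ent :: "(vec \<Rightarrow> vec) \<Rightarrow> op2" where
  "ent A = (\<lambda>i j k l. A (\<lambda>is. if is = [k, l] then 1 else 0) [i, j])"

definition Qhat :: "nat \<Rightarrow> (real \<Rightarrow> real \<Rightarrow> op2) \<Rightarrow> real \<Rightarrow> real \<Rightarrow> op2" where
  "Qhat r Q y1 y2 = ent (\<lambda>v. Sflip (op_at r 0 (Q y2 y1) (Sflip v)))"

text \<open><Q~ e_i\<otimes>e_j, e_k\<otimes>e_l> = <Q e_k\<otimes>e_i, e_l\<otimes>e_j>, i.e. entry (kl),(ij) of Q~
equals entry (lj),(ki) of Q.\<close>
definition Qtilde :: "(real \<Rightarrow> real \<Rightarrow> op2) \<Rightarrow> real \<Rightarrow> real \<Rightarrow> op2" where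
  "Qtilde Q y1 y2 = (\<lambda>k l i j. Q y1 y2 l j k i)"

definition Qker :: "nat \<Rightarrow> (real \<Rightarrow> real \<Rightarrow> op2) \<Rightarrow> nat \<Rightarrow> 'z kernel \<Rightarrow> 'z kernel" where
  "Qker r M i f = (\<lambda>xs. op_at r i (M (fst (xs ! i)) (fst (xs ! Suc i))) (f (lswap i xs)))"

text \<open>g(x_1..x_{n-2}) = \<integral>_X Tr_i f(x_1,..,x_{i-1},x,x,x_i,..,x_{n-2}) dx  (0-indexed i)\<close>
definition contr :: "nat \<Rightarrow> nat \<Rightarrow> ('z::euclidean_space) kernel \<Rightarrow> 'z kernel" where
  "contr r i f = (\<lambda>xs is. integral\<^sup>L lborel (\<lambda>x::real \<times> 'z.
      \<Sum>k<r. f (take i xs @ [x, x] @ drop i xs) (take i is @ [k, k] @ drop i is)))"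

definition tmul :: "'z mterm \<Rightarrow> 'z mterm \<Rightarrow> 'z mterm" where
  "tmul a b = (fst a @ fst b, (\<lambda>xs is. snd a (take (length (fst a)) xs) (take (length (fst a)) is)
                                   * snd b (drop (length (fst a)) xs) (drop (length (fst a)) is)))"

definition tstar :: "'z mterm \<Rightarrow> 'z mterm" where
  "tstar a = (rev (map Not (fst a)), (\<lambda>xs is. cnj (snd a (rev xs) (rev is))))"

definition one_term :: "'z mterm" where
  "one_term = ([], (\<lambda>xs is. 1))"

text \<open>Elements of the algebra as finite formal sums (lists) of terms.\<close>
definition amul :: "'z mterm list \<Rightarrow> 'z mterm list \<Rightarrow> 'z mterm list" where
  "amul as bs = concat (map (\<lambda>a. map (tmul a) bs) as)"

definition astar :: "'z mterm list \<Rightarrow> 'z mterm list" where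
  "astar as = map tstar as"

definition tauA :: "('z mterm \<Rightarrow> complex) \<Rightarrow> 'z mterm list \<Rightarrow> complex" where
  "tauA \<tau> as = (\<Sum>a\<leftarrow>as. \<tau> a)"

definition in_alg :: "nat \<Rightarrow> ('z::euclidean_space) mterm \<Rightarrow> bool" where
  "in_alg r a \<longleftrightarrow> snd a \<in> Fsp r (length (fst a))"

definition Aop :: "bool \<Rightarrow> 'z kernel \<Rightarrow> 'z mterm" where
  "Aop sg f = ([sg], f)"

definition Bop :: "'z kernel \<Rightarrow> 'z mterm list" where
  "Bop f = [Aop True f, Aop False (\<lambda>xs is. cnj (f xs is))]"

definition QYB :: "nat \<Rightarrow> (real \<Rightarrow> real \<Rightarrow> op2) \<Rightarrow> bool" where
  "QYB r Q \<longleftrightarrow>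
    (\<forall>i<r. \<forall>j<r. \<forall>k<r. \<forall>l<r. continuous_on UNIV (\<lambda>p::real \<times> real. Q (fst p) (snd p) i j k l)) \<and>
    (\<forall>y1 y2. \<forall>k<r. \<forall>l<r. \<forall>k'<r. \<forall>l'<r.
        (\<Sum>i<r. \<Sum>j<r. cnj (Q y1 y2 i j k l) * Q y1 y2 i j k' l') = (if k = k' \<and> l = l' then 1 else 0)
      \<and> (\<Sum>i<r. \<Sum>j<r. Q y1 y2 k l i j * cnj (Q y1 y2 k' l' i j)) = (if k = k' \<and> l = l' then 1 else 0)) \<and>
    (\<forall>y1 y2. \<forall>i<r. \<forall>j<r. \<forall>k<r. \<forall>l<r. cnj (Q y1 y2 k l i j) = Q y2 y1 i j k l) \<and>
    (\<forall>y1 y2 y3 v is. mi r 3 is \<longrightarrow>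
        op_at r 0 (Q y1 y2) (op_at r 1 (Q y1 y3) (op_at r 0 (Q y2 y3) v)) is
      = op_at r 1 (Q y2 y3) (op_at r 0 (Q y1 y3) (op_at r 1 (Q y1 y2) v)) is)"

text \<open>States on the Q-MCR algebra: linear functionals on the span of the terms which
are compatible with linearity of Phi in f, with the identification of kernels as
elements of L^2-type spaces (a.e. equality), and with the defining relations;
normalised and positive.\<close>
definition mcr_state :: "nat \<Rightarrow> (real \<Rightarrow> real \<Rightarrow> op2) \<Rightarrow> (('z::euclidean_space) mterm \<Rightarrow> complex) \<Rightarrow> bool" where
  "mcr_state r Q \<tau> \<longleftrightarrow>
    \<tau> one_term = 1 \<and>
    (\<forall>s f h c. f \<in> Fsp r (length s) \<longrightarrow> h \<in> Fsp r (length s) \<longrightarrow>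
        \<tau> (s, \<lambda>xs is. f xs is + h xs is) = \<tau> (s, f) + \<tau> (s, h) \<and>
        \<tau> (s, \<lambda>xs is. c * f xs is) = c * \<tau> (s, f)) \<and>
    (\<forall>s f f'. f \<in> Fsp r (length s) \<longrightarrow>
        (\<forall>is. mi r (length s) is \<longrightarrow>
          (AE v in PiM {..<length s} (\<lambda>_. lborel :: (real \<times> 'z) measure).
             f (map v [0..<length s]) is = f' (map v [0..<length s]) is)) \<longrightarrow>
        \<tau> (s, f) = \<tau> (s, f')) \<and>
    (\<forall>s f i. f \<in> Fsp r (length s) \<longrightarrow> Suc i < length s \<longrightarrow>
        (s ! i \<and> s ! Suc i \<longrightarrow> \<tau> (s, f) = \<tau> (s, Qker r Q i f)) \<and>
        (\<not> s ! i \<and> \<not> s ! Suc i \<longrightarrow> \<tau> (s, f) = \<tau> (s, Qker r (Qhat r Q) i f)) \<and>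
        (\<not> s ! i \<and> s ! Suc i \<longrightarrow>
           \<tau> (s, f) = \<tau> (lswap i s, Qker r (\<lambda>a b. Qtilde Q b a) i f)
                     + \<tau> (take i s @ drop (Suc (Suc i)) s, contr r i f))) \<and>
    (\<forall>as. (\<forall>a\<in>set as. in_alg r a) \<longrightarrow>
        Im (tauA \<tau> (amul (astar as) as)) = 0 \<and> 0 \<le> Re (tauA \<tau> (amul (astar as) as)))"

text \<open>Continuity assumption (sequential, w.r.t. the inductive-limit convergence on C_0).\<close>
definition mcr_cont :: "nat \<Rightarrow> (('z::euclidean_space) mterm \<Rightarrow> complex) \<Rightarrow> bool" where
  "mcr_cont r \<tau> \<longleftrightarrow>
    (\<forall>s gs. length gs = length s \<longrightarrow> (\<forall>g\<in>set gs. L2 g) \<longrightarrow>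
      (\<forall>\<phi>s \<phi>. (\<forall>k. Cc r (length s) (\<phi>s k)) \<longrightarrow> Cc r (length s) \<phi> \<longrightarrow>
         (\<exists>C. \<forall>k ys is. length ys = length s \<longrightarrow> mi r (length s) is \<longrightarrow>
               (\<exists>y\<in>set ys. C < \<bar>y\<bar>) \<longrightarrow> \<phi>s k ys is = 0 \<and> \<phi> ys is = 0) \<longrightarrow>
         (\<forall>\<epsilon>>0. \<exists>N. \<forall>k\<ge>N. \<forall>ys is. length ys = length s \<longrightarrow> mi r (length s) is \<longrightarrow>
               cmod (\<phi>s k ys is - \<phi> ys is) < \<epsilon>) \<longrightarrow>
         (\<lambda>k. \<tau> (s, prodker (\<phi>s k) gs)) \<longlonglongrightarrow> \<tau> (s, prodker \<phi> gs)))"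

definition Aword :: "bool list \<Rightarrow> (real \<Rightarrow> nat \<Rightarrow> complex) list \<Rightarrow> ('z \<Rightarrow> complex) list \<Rightarrow> 'z mterm" where
  "Aword sgs \<phi>s gs = foldr tmul (map (\<lambda>(sg, \<phi>, g). Aop sg (ker1 \<phi> g)) (zip sgs (zip \<phi>s gs))) one_term"

definition Bword :: "(real \<Rightarrow> nat \<Rightarrow> complex) list \<Rightarrow> ('z \<Rightarrow> complex) list \<Rightarrow> 'z mterm list" where
  "Bword \<phi>s gs = foldr amul (map (\<lambda>(\<phi>, g). Bop (ker1 \<phi> g)) (zip \<phi>s gs)) [one_term]"

end

theory Submission
  imports Defs
begin

fun tk :: "(real \<Rightarrow> nat \<Rightarrow> complex) list \<Rightarrow> ('z \<Rightarrow> complex) list \<Rightarrow> (real \<times> 'z) list \<Rightarrow> nat list \<Rightarrow> complex" where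
  "tk (\<phi>#\<phi>s) (g#gs) (x#xs) (i#is) = \<phi> (fst x) i * g (snd x) * tk \<phi>s gs xs is"
| "tk _ _ _ _ = 1"

definition tens :: "(real \<Rightarrow> nat \<Rightarrow> complex) list \<Rightarrow> real list \<Rightarrow> nat list \<Rightarrow> complex" where
  "tens \<phi>s ys is = (\<Prod>k<length \<phi>s. (\<phi>s!k) (ys!k) (is!k))"

lemma tk_nth:
  "length gs = length \<phi>s \<Longrightarrow> length xs = length \<phi>s \<Longrightarrow> length is = length \<phi>s \<Longrightarrow>
   tk \<phi>s gs xs is = (\<Prod>k<length \<phi>s. (\<phi>s!k) (fst (xs!k)) (is!k) * (gs!k) (snd (xs!k)))"
proof (induction \<phi>s arbitrary: gs xs "is")
  case Nil then show ?case by (cases gs; cases xs; cases "is") auto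
next
  case (Cons a \<phi>s)
  then show ?case
    by (cases gs; cases xs; cases "is") (auto simp del: prod.lessThan_Suc simp add: prod.lessThan_Suc_shift)
qed

lemma tk_append:
  "length B = length A \<Longrightarrow> length C = length A \<Longrightarrow> length D = length A \<Longrightarrow>
   tk (A@A') (B@B') (C@C') (D@D') = tk A B C D * tk A' B' C' D'"
proof (induction A arbitrary: B C D)
  case Nil then show ?case by auto
next
  case (Cons a A)
  then show ?case by (cases B; cases C; cases D) auto
qed

lemma prodker_tens:
  "length gs = length \<phi>s \<Longrightarrow> length xs = length \<phi>s \<Longrightarrow> length is = length \<phi>s \<Longrightarrow>
   prodker (\<lambda>ys is. c * tens \<phi>s ys is) gs xs is = c * tk \<phi>s gs xs is"
  by (simp add: prodker_def tens_def tk_nth prod.distrib)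

lemma prodker_tens1:
  "length gs = length \<phi>s \<Longrightarrow> length xs = length \<phi>s \<Longrightarrow> length is = length \<phi>s \<Longrightarrow>
   prodker (tens \<phi>s) gs xs is = tk \<phi>s gs xs is"
  using prodker_tens[of gs \<phi>s xs "is" 1] by simp

lemma Aword_Cons: "Aword (s#ss) (\<phi>#\<phi>s) (g#gs) = tmul (Aop s (ker1 \<phi> g)) (Aword ss \<phi>s gs)"
  by (simp add: Aword_def)

lemma Aword_fst: "length \<phi>s = length ss \<Longrightarrow> length gs = length ss \<Longrightarrow> fst (Aword ss \<phi>s gs) = ss"
proof (induction ss arbitrary: \<phi>s gs)
  case Nil then show ?case by (simp add: Aword_def one_term_def)
next
  case (Cons a ss)
  then show ?case by (cases \<phi>s; cases gs) (auto simp: Aword_Cons tmul_def Aop_def)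
qed

lemma Aword_snd: "length \<phi>s = length ss \<Longrightarrow> length gs = length ss \<Longrightarrow>
   length xs = length ss \<Longrightarrow> length is = length ss \<Longrightarrow> snd (Aword ss \<phi>s gs) xs is = tk \<phi>s gs xs is"
proof (induction ss arbitrary: \<phi>s gs xs "is")
  case Nil then show ?case by (simp add: Aword_def one_term_def)
next
  case (Cons a ss)
  then show ?case by (cases \<phi>s; cases gs; cases xs; cases "is") (auto simp: Aword_Cons tmul_def Aop_def ker1_def)
qed

lemma Fsp_prodker:
  assumes "Cc r n \<phi>" "length gs = n" "\<forall>g\<in>set gs. L2 g"
  shows "prodker \<phi> gs \<in> Fsp r n"
  unfolding Fsp_def
  by (rule CollectI, rule exI[of _ "[(\<phi>, gs)]"]) (use assms in auto)

lemma state_agree: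
  assumes "mcr_state r Q \<tau>" "f \<in> Fsp r (length s)"
    "\<And>xs is. length xs = length s \<Longrightarrow> mi r (length s) is \<Longrightarrow> f xs is = f' xs is"
  shows "\<tau> (s, f) = \<tau> (s, f')"
proof -
  have "\<forall>is. mi r (length s) is \<longrightarrow>
          (AE v in PiM {..<length s} (\<lambda>_. lborel :: (real \<times> 'a) measure).
             f (map v [0..<length s]) is = f' (map v [0..<length s]) is)"
    using assms(3) by (auto intro!: AE_I2)
  then show ?thesis using assms(1,2) unfolding mcr_state_def by blast
qed

lemma state_add:
  assumes "mcr_state r Q \<tau>" "f \<in> Fsp r (length s)" "h \<in> Fsp r (length s)"
  shows "\<tau> (s, \<lambda>xs is. f xs is + h xs is) = \<tau> (s, f) + \<tau> (s, h)"
  using assms unfolding mcr_state_def by blast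

lemma state_scale:
  assumes "mcr_state r Q \<tau>" "f \<in> Fsp r (length s)"
  shows "\<tau> (s, \<lambda>xs is. c * f xs is) = c * \<tau> (s, f)"
  using assms unfolding mcr_state_def by blast

lemma Cc1_bound:
  assumes "Cc1 r \<phi>" shows "\<exists>C. \<forall>y j. j < r \<longrightarrow> C < \<bar>y\<bar> \<longrightarrow> \<phi> y j = 0"
proof -
  have "\<forall>j<r. \<exists>C. \<forall>y. C < \<bar>y\<bar> \<longrightarrow> \<phi> y j = 0" using assms unfolding Cc1_def by blast
  then obtain Cf where Cf: "\<And>j y. j < r \<Longrightarrow> Cf j < \<bar>y\<bar> \<Longrightarrow> \<phi> y j = 0" by metis
  show ?thesis
  proof (intro exI allI impI)
    fix y j assume "j < r" "(\<Sum>j<r. \<bar>Cf j\<bar>) < \<bar>y\<bar>"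
    moreover have "Cf j \<le> (\<Sum>j<r. \<bar>Cf j\<bar>)"
    proof -
      have "Cf j \<le> \<bar>Cf j\<bar>" by simp
      also have "\<dots> \<le> (\<Sum>j<r. \<bar>Cf j\<bar>)" by (rule member_le_sum) (use \<open>j < r\<close> in auto)
      finally show ?thesis .
    qed
    ultimately show "\<phi> y j = 0" using Cf by fastforce
  qed
qed

lemma Cc1_bound_list:
  assumes "\<forall>\<phi>\<in>set \<phi>s. Cc1 r \<phi>" shows "\<exists>C. \<forall>\<phi>\<in>set \<phi>s. \<forall>y j. j < r \<longrightarrow> C < \<bar>y\<bar> \<longrightarrow> \<phi> y j = 0"
  using assms
proof (induction \<phi>s)
  case Nil then show ?case by auto
next
  case (Cons a \<phi>s)
  then obtain C1 where C1: "\<forall>\<phi>\<in>set \<phi>s. \<forall>y j. j < r \<longrightarrow> C1 < \<bar>y\<bar> \<longrightarrow> \<phi> y j = 0" by auto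
  obtain C2 where C2: "\<forall>y j. j < r \<longrightarrow> C2 < \<bar>y\<bar> \<longrightarrow> a y j = 0" using Cons Cc1_bound by force
  show ?case
    by (rule exI[of _ "max C1 C2"]) (use C1 C2 in auto)
qed

lemma Cc_tens:
  assumes "\<forall>\<phi>\<in>set \<phi>s. Cc1 r \<phi>" shows "Cc r (length \<phi>s) (tens \<phi>s)"
  unfolding Cc_def
proof (intro allI impI conjI)
  fix "is" assume mi: "mi r (length \<phi>s) is"
  have eq: "(\<lambda>v::nat\<Rightarrow>real. tens \<phi>s (map v [0..<length \<phi>s]) is) = (\<lambda>v. \<Prod>k<length \<phi>s. (\<phi>s!k) (v k) (is!k))"
    by (auto simp: tens_def intro!: prod.cong)
  have "continuous_on UNIV (\<lambda>v::nat\<Rightarrow>real. (\<phi>s!k) (v k) (is!k))" if "k < length \<phi>s" for k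
  proof -
    have "is!k < r" using mi that unfolding mi_def by auto
    then have "continuous_on UNIV (\<lambda>y. (\<phi>s!k) y (is!k))"
      using assms that unfolding Cc1_def by auto
    then show ?thesis
      using continuous_on_compose2[of UNIV "\<lambda>y. (\<phi>s!k) y (is!k)" UNIV "\<lambda>v::nat\<Rightarrow>real. v k"] by auto
  qed
  then show "continuous_on UNIV (\<lambda>v::nat\<Rightarrow>real. tens \<phi>s (map v [0..<length \<phi>s]) is)"
    unfolding eq by (intro continuous_on_prod) auto
next
  fix "is" assume mi: "mi r (length \<phi>s) is"
  obtain C where C: "\<forall>\<phi>\<in>set \<phi>s. \<forall>y j. j < r \<longrightarrow> C < \<bar>y\<bar> \<longrightarrow> \<phi> y j = 0"
    using Cc1_bound_list[OF assms] by blast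
  show "\<exists>C. \<forall>ys. length ys = length \<phi>s \<longrightarrow> (\<exists>y\<in>set ys. C < \<bar>y\<bar>) \<longrightarrow> tens \<phi>s ys is = 0"
  proof (intro exI allI impI)
    fix ys :: "real list" assume len: "length ys = length \<phi>s" and "\<exists>y\<in>set ys. C < \<bar>y\<bar>"
    then obtain k where k: "k < length ys" "C < \<bar>ys!k\<bar>" by (metis in_set_conv_nth)
    have "(\<phi>s!k) (ys!k) (is!k) = 0"
      using C k mi len unfolding mi_def by (metis nth_mem)
    then show "tens \<phi>s ys is = 0" unfolding tens_def using k len
      by (metis (no_types, lifting) finite_lessThan lessThan_iff prod_zero_iff)
  qed
qed

lemma Cc_add: "Cc r n f \<Longrightarrow> Cc r n h \<Longrightarrow> Cc r n (\<lambda>ys is. f ys is + h ys is)"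
  unfolding Cc_def
proof (intro allI impI conjI)
  fix "is" assume f: "\<forall>is. mi r n is \<longrightarrow> continuous_on UNIV (\<lambda>v. f (map v [0..<n]) is) \<and>
             (\<exists>C. \<forall>ys. length ys = n \<longrightarrow> (\<exists>y\<in>set ys. C < \<bar>y\<bar>) \<longrightarrow> f ys is = 0)"
   and h: "\<forall>is. mi r n is \<longrightarrow> continuous_on UNIV (\<lambda>v. h (map v [0..<n]) is) \<and>
             (\<exists>C. \<forall>ys. length ys = n \<longrightarrow> (\<exists>y\<in>set ys. C < \<bar>y\<bar>) \<longrightarrow> h ys is = 0)"
   and mi: "mi r n is"
  show "continuous_on UNIV (\<lambda>v. f (map v [0..<n]) is + h (map v [0..<n]) is)"
    using f h mi by (auto intro!: continuous_on_add)
  obtain C1 C2 where "\<forall>ys. length ys = n \<longrightarrow> (\<exists>y\<in>set ys. C1 < \<bar>y\<bar>) \<longrightarrow> f ys is = 0"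
     "\<forall>ys. length ys = n \<longrightarrow> (\<exists>y\<in>set ys. C2 < \<bar>y\<bar>) \<longrightarrow> h ys is = 0" using f h mi by blast
  then show "\<exists>C. \<forall>ys. length ys = n \<longrightarrow> (\<exists>y\<in>set ys. C < \<bar>y\<bar>) \<longrightarrow> f ys is + h ys is = 0"
    by (intro exI[of _ "max C1 C2"]) force
qed

lemma Cc_scale: "Cc r n f \<Longrightarrow> Cc r n (\<lambda>ys is. c * f ys is)"
  unfolding Cc_def
  apply (intro allI impI conjI)
   apply (auto intro!: continuous_on_mult continuous_on_const)[1]
  by (metis mult_zero_right)

lemma Cc_zero: "Cc r n (\<lambda>ys is. 0)"
  unfolding Cc_def by auto

lemma one_Fsp: "(\<lambda>xs is. 1) \<in> (Fsp r 0 :: ('z::euclidean_space) kernel set)"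
proof -
  have "Cc r 0 (\<lambda>ys is. 1)" unfolding Cc_def by auto
  then have "prodker (\<lambda>ys is. 1) ([]::('z\<Rightarrow>complex) list) \<in> Fsp r 0" by (rule Fsp_prodker) auto
  moreover have "prodker (\<lambda>ys is. 1) ([]::('z\<Rightarrow>complex) list) = (\<lambda>xs is. 1)" by (simp add: prodker_def)
  ultimately show ?thesis by metis
qed

lemma state_nil:
  fixes \<tau> :: "('z::euclidean_space) mterm \<Rightarrow> complex"
  assumes "mcr_state r Q \<tau>" "f \<in> Fsp r 0"
  shows "\<tau> ([], f) = f [] []"
proof -
  have c: "Cc r 0 (\<lambda>ys is. f [] [])" unfolding Cc_def by auto
  have P: "prodker (\<lambda>ys is. f [] []) ([]::('z\<Rightarrow>complex) list) = (\<lambda>xs is. f [] [])" by (simp add: prodker_def)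
  have "prodker (\<lambda>ys is. f [] []) ([]::('z\<Rightarrow>complex) list) \<in> Fsp r 0" by (rule Fsp_prodker[OF c]) auto
  then have F: "(\<lambda>(xs::(real\<times>'z) list) is. f [] []) \<in> Fsp r (length ([]::bool list))" using P by simp
  have A: "\<tau> ([], \<lambda>xs is. f [] []) = \<tau> ([], f)"
    by (rule state_agree[OF assms(1) F]) (auto simp: mi_def)
  have B: "\<tau> ([], \<lambda>xs is. f [] []) = f [] [] * \<tau> ([], \<lambda>xs is. 1)"
    using state_scale[OF assms(1), of "\<lambda>xs is. 1" "[]" "f [] []"] one_Fsp by auto
  have "\<tau> ([], \<lambda>xs is. 1) = 1" using assms(1) unfolding mcr_state_def one_term_def by auto
  then show ?thesis using A B by simp
qed

definition nf :: "nat \<Rightarrow> (real \<times> (nat \<Rightarrow> real \<Rightarrow> real)) list \<Rightarrow> (nat \<Rightarrow> real) \<Rightarrow> real" where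
  "nf n L v = sum_list (map (\<lambda>(c,p). c * (\<Prod>k<n. p k (v k))) L)"

definition Rg :: "nat \<Rightarrow> ((nat \<Rightarrow> real) \<Rightarrow> real) set" where
  "Rg n = {nf n L | L. \<forall>(c,p)\<in>set L. \<forall>k. continuous_on UNIV (p k)}"

definition pm :: "(real \<times> (nat \<Rightarrow> real \<Rightarrow> real)) list \<Rightarrow> (real \<times> (nat \<Rightarrow> real \<Rightarrow> real)) list \<Rightarrow> (real \<times> (nat \<Rightarrow> real \<Rightarrow> real)) list" where
  "pm La Lb = concat (map (\<lambda>(c,p). map (\<lambda>(c',p'). (c*c', \<lambda>k y. p k y * p' k y)) Lb) La)"

lemma nf_append: "nf n (La @ Lb) v = nf n La v + nf n Lb v"
  by (simp add: nf_def)

lemma nf_pm: "nf n (pm La Lb) v = nf n La v * nf n Lb v"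
proof (induction La)
  case Nil then show ?case by (simp add: nf_def pm_def)
next
  case (Cons a La)
  obtain c p where a: "a = (c,p)" by fastforce
  have "nf n (map (\<lambda>(c',p'). (c*c', \<lambda>k y. p k y * p' k y)) Lb) v = (c * (\<Prod>k<n. p k (v k))) * nf n Lb v"
  proof (induction Lb)
    case Nil then show ?case by (simp add: nf_def)
  next
    case (Cons b Lb)
    obtain c' p' where b: "b = (c',p')" by fastforce
    show ?case using Cons by (simp add: nf_def b prod.distrib algebra_simps)
  qed
  moreover have "pm (a#La) Lb = map (\<lambda>(c',p'). (c*c', \<lambda>k y. p k y * p' k y)) Lb @ pm La Lb"
    by (simp add: pm_def a)
  ultimately show ?case using Cons by (simp add: nf_append a nf_def algebra_simps)
qed

lemma nf_cont:
  assumes "\<forall>(c,p)\<in>set L. \<forall>k. continuous_on UNIV (p k)"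
  shows "continuous_on UNIV (nf n L)"
  using assms
proof (induction L)
  case Nil then show ?case by (simp add: nf_def continuous_on_const)
next
  case (Cons a L)
  obtain c p where a: "a = (c,p)" by fastforce
  have "continuous_on UNIV (\<lambda>v::nat\<Rightarrow>real. p k (v k))" for k
    using Cons(2) a continuous_on_compose2[of UNIV "p k" UNIV "\<lambda>v::nat\<Rightarrow>real. v k"] by auto
  then have "continuous_on UNIV (\<lambda>v::nat\<Rightarrow>real. c * (\<Prod>k<n. p k (v k)))"
    by (intro continuous_on_mult continuous_on_const continuous_on_prod) auto
  moreover have "nf n (a#L) = (\<lambda>v. c * (\<Prod>k<n. p k (v k)) + nf n L v)"
    by (auto simp: nf_def a)
  ultimately show ?case using Cons by (auto intro!: continuous_on_add)
qed

lemma Rg_ring: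
  fixes S :: "(nat \<Rightarrow> real) set"
  assumes "compact S" and Sz: "\<And>v k. v \<in> S \<Longrightarrow> n \<le> k \<Longrightarrow> v k = 0"
    and f: "continuous_on S f" and e: "0 < e"
  shows "\<exists>G. G \<in> Rg n \<and> (\<forall>v\<in>S. \<bar>f v - G v\<bar> < e)"
proof (rule Stone_Weierstrass_HOL[of S "\<lambda>G. G \<in> Rg n", OF assms(1) _ _ _ _ _ f e])
  fix c :: real
  have "(\<lambda>v. c) = nf n [(c, \<lambda>k y. 1)]" by (auto simp: nf_def)
  then show "(\<lambda>v. c) \<in> Rg n" unfolding Rg_def by (force intro: continuous_on_const)
next
  fix G assume "G \<in> Rg n"
  then show "continuous_on S G" unfolding Rg_def using nf_cont continuous_on_subset by blast
next
  fix G H assume "G \<in> Rg n \<and> H \<in> Rg n"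
  then obtain La Lb where L: "G = nf n La" "H = nf n Lb" "\<forall>(c,p)\<in>set La. \<forall>k. continuous_on UNIV (p k)"
     "\<forall>(c,p)\<in>set Lb. \<forall>k. continuous_on UNIV (p k)" unfolding Rg_def by blast
  have "(\<lambda>x. G x + H x) = nf n (La @ Lb)" using L by (auto simp: nf_append)
  then show "(\<lambda>x. G x + H x) \<in> Rg n" unfolding Rg_def using L by force
next
  fix G H assume "G \<in> Rg n \<and> H \<in> Rg n"
  then obtain La Lb where L: "G = nf n La" "H = nf n Lb" "\<forall>(c,p)\<in>set La. \<forall>k. continuous_on UNIV (p k)"
     "\<forall>(c,p)\<in>set Lb. \<forall>k. continuous_on UNIV (p k)" unfolding Rg_def by blast
  have "(\<lambda>x. G x * H x) = nf n (pm La Lb)" using L by (auto simp: nf_pm)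
  moreover have "\<forall>(c,p)\<in>set (pm La Lb). \<forall>k. continuous_on UNIV (p k)"
    using L(3,4) by (fastforce simp: pm_def intro!: continuous_on_mult)
  ultimately show "(\<lambda>x. G x * H x) \<in> Rg n" unfolding Rg_def by blast
next
  fix x y assume xy: "x \<in> S \<and> y \<in> S \<and> x \<noteq> y"
  then obtain k where k: "x k \<noteq> y k" by auto
  then have kn: "k < n" using Sz xy by (metis not_le)
  define L where "L = [(1::real, \<lambda>k' (t::real). if k' = k then t else 1)]"
  have "nf n L z = z k" for z using kn by (simp add: nf_def L_def prod.If_cases Int_absorb1 prod.delta)
  moreover have "continuous_on UNIV (\<lambda>t::real. if k' = k then t else 1)" for k'
    by (cases "k' = k") (simp_all add: continuous_on_const continuous_on_id)
  then have "\<forall>(c,p)\<in>set L. \<forall>k. continuous_on UNIV (p k)" by (auto simp: L_def)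
  ultimately show "\<exists>G. G \<in> Rg n \<and> G x \<noteq> G y" unfolding Rg_def using k by (intro exI[of _ "nf n L"]) auto
qed

definition boxn :: "nat \<Rightarrow> real \<Rightarrow> (nat \<Rightarrow> real) set" where
  "boxn n D = Pi\<^sub>E UNIV (\<lambda>k. if k < n then {-D..D} else {0})"

lemma compact_box: "compact (boxn n D)"
proof -
  have "compactin (product_topology (\<lambda>i. euclidean) UNIV) (boxn n D)"
    unfolding boxn_def compactin_PiE by auto
  then show ?thesis by (simp add: euclidean_product_topology)
qed

lemma box_zero: "v \<in> boxn n D \<Longrightarrow> n \<le> k \<Longrightarrow> v k = 0"
  unfolding boxn_def by (auto simp: PiE_iff) (metis empty_iff insert_iff not_le)

definition cutf :: "real \<Rightarrow> real \<Rightarrow> real" where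
  "cutf D y = max 0 (min 1 (D - \<bar>y\<bar>))"

lemma cut_cont: "continuous_on UNIV (cutf D)"
  unfolding cutf_def by (intro continuous_intros)

lemma cut_bounds: "0 \<le> cutf D y" "cutf D y \<le> 1"
  unfolding cutf_def by auto

lemma cut_out: "D < \<bar>y\<bar> \<Longrightarrow> cutf D y = 0"
  unfolding cutf_def by auto

lemma cut_in: "\<bar>y\<bar> \<le> D - 1 \<Longrightarrow> cutf D y = 1"
  unfolding cutf_def by auto

definition chi :: "nat \<Rightarrow> real \<Rightarrow> real list \<Rightarrow> real" where
  "chi n D ys = (\<Prod>k<n. cutf D (ys!k))"

lemma chi_bounds: "0 \<le> chi n D ys" "chi n D ys \<le> 1"
  unfolding chi_def using cut_bounds by (auto intro: prod_nonneg prod_le_1)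

lemma chi_out: "length ys = n \<Longrightarrow> \<exists>y\<in>set ys. D < \<bar>y\<bar> \<Longrightarrow> chi n D ys = 0"
  unfolding chi_def by (metis (no_types, lifting) cut_out finite_lessThan in_set_conv_nth lessThan_iff prod_zero_iff)

lemma chi_in: "length ys = n \<Longrightarrow> \<forall>y\<in>set ys. \<bar>y\<bar> \<le> D - 1 \<Longrightarrow> chi n D ys = 1"
  unfolding chi_def by (auto intro!: prod.neutral cut_in)

definition Pl :: "nat \<Rightarrow> real list \<Rightarrow> nat \<Rightarrow> real" where
  "Pl n ys = (\<lambda>k. if k < n then ys!k else 0)"

definition KK :: "nat \<Rightarrow> real \<Rightarrow> ((nat \<Rightarrow> real) \<Rightarrow> real) \<Rightarrow> nat list \<Rightarrow> real list \<Rightarrow> nat list \<Rightarrow> complex" where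
  "KK n D G is0 = (\<lambda>ys is. complex_of_real (chi n D ys * G (Pl n ys)) * (if \<forall>k<n. is!k = is0!k then 1 else 0))"

lemma prod_ind: fixes n :: nat shows "(\<Prod>k<n. (if P k then 1 else 0)::complex) = (if \<forall>k<n. P k then 1 else 0)"
  by (induction n) (auto simp: less_Suc_eq)

lemma KK_T:
  fixes T :: "(real list \<Rightarrow> nat list \<Rightarrow> complex) set"
  assumes Tadd: "\<And>a b. a \<in> T \<Longrightarrow> b \<in> T \<Longrightarrow> (\<lambda>ys is. a ys is + b ys is) \<in> T"
    and Tscale: "\<And>a c. a \<in> T \<Longrightarrow> (\<lambda>ys is. c * a ys is) \<in> T"
    and Tzero: "(\<lambda>ys is. 0) \<in> T"
    and Ttens: "\<And>\<phi>s. length \<phi>s = n \<Longrightarrow> \<forall>\<phi>\<in>set \<phi>s. Cc1_real r \<phi> \<Longrightarrow> tens \<phi>s \<in> T"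
    and G: "G \<in> Rg n"
  shows "KK n D G is0 \<in> T"
proof -
  obtain L where L: "G = nf n L" "\<forall>(c,p)\<in>set L. \<forall>k. continuous_on UNIV (p k)"
    using G unfolding Rg_def by blast
  have "KK n D (nf n L) is0 \<in> T" using L(2)
  proof (induction L)
    case Nil
    have "KK n D (nf n []) is0 = (\<lambda>ys is. 0)" by (auto simp: KK_def nf_def)
    then show ?case using Tzero by simp
  next
    case (Cons a L)
    obtain c p where a: "a = (c,p)" by fastforce
    define \<psi>s where "\<psi>s = map (\<lambda>k. \<lambda>y j. complex_of_real (cutf D y * p k y) * (if j = is0!k then 1 else 0)) [0..<n]"
    have pc: "continuous_on UNIV (p k)" for k using Cons(2) a by auto
    have "Cc1_real r \<psi>" if psi: "\<psi> \<in> set \<psi>s" for \<psi>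
    proof -
      obtain k where k: "\<psi> = (\<lambda>y j. complex_of_real (cutf D y * p k y) * (if j = is0!k then 1 else 0))"
        using psi unfolding \<psi>s_def set_map by blast
      have "continuous_on UNIV (\<lambda>y. complex_of_real (cutf D y * p k y) * (if j = is0!k then 1 else 0))" for j
        by (intro continuous_intros cut_cont[THEN continuous_on_compose2] pc[THEN continuous_on_compose2]) auto
      moreover have "\<forall>y. D < \<bar>y\<bar> \<longrightarrow> \<psi> y j = 0" for j using cut_out k by auto
      ultimately show ?thesis unfolding Cc1_real_def Cc1_def k
        by (intro conjI allI impI exI[of _ D]) (auto simp del: of_real_mult)
    qed
    then have "tens \<psi>s \<in> T" using Ttens \<psi>s_def by auto
    then have t1: "(\<lambda>ys is. complex_of_real c * tens \<psi>s ys is) \<in> T" using Tscale by blast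
    have eq1: "KK n D (nf n [(c,p)]) is0 = (\<lambda>ys is. complex_of_real c * tens \<psi>s ys is)"
    proof (intro ext)
      fix ys "is"
      have "tens \<psi>s ys is = (\<Prod>k<n. complex_of_real (cutf D (ys!k) * p k (ys!k)) * (if is!k = is0!k then 1 else 0))"
        unfolding tens_def \<psi>s_def by (auto intro!: prod.cong)
      also have "\<dots> = complex_of_real (chi n D ys * (\<Prod>k<n. p k (ys!k))) * (if \<forall>k<n. is!k = is0!k then 1 else 0)"
        unfolding prod.distrib prod_ind chi_def by (simp add: prod.distrib)
      finally show "KK n D (nf n [(c,p)]) is0 ys is = complex_of_real c * tens \<psi>s ys is"
        by (simp add: KK_def nf_def Pl_def)
    qed
    have eq2: "KK n D (nf n (a#L)) is0 = (\<lambda>ys is. KK n D (nf n [(c,p)]) is0 ys is + KK n D (nf n L) is0 ys is)"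
      by (auto simp: KK_def nf_def a algebra_simps)
    show ?case unfolding eq2 eq1 using Tadd t1 Cons by auto
  qed
  then show ?thesis using L by simp
qed

lemma T_sum:
  fixes T :: "(real list \<Rightarrow> nat list \<Rightarrow> complex) set"
  assumes Tadd: "\<forall>a\<in>T. \<forall>b\<in>T. (\<lambda>ys is. a ys is + b ys is) \<in> T"
    and Tzero: "(\<lambda>ys is. 0) \<in> T"
  shows "finite I \<Longrightarrow> (\<forall>i\<in>I. F i \<in> T) \<Longrightarrow> (\<lambda>ys is. \<Sum>i\<in>I. F i ys is) \<in> T"
proof (induction I rule: finite_induct)
  case empty then show ?case using Tzero by simp
next
  case (insert x J)
  then have a: "F x \<in> T" and b: "(\<lambda>ys is. \<Sum>i\<in>J. F i ys is) \<in> T" by auto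
  from Tadd a have "\<forall>b\<in>T. (\<lambda>ys is. F x ys is + b ys is) \<in> T" by (rule bspec)
  from bspec[OF this b] have "(\<lambda>ys is. F x ys is + (\<Sum>i\<in>J. F i ys is)) \<in> T" by simp
  then show ?case using insert(1,2) by (simp add: sum.insert)
qed

lemma finite_mi: "finite {is. mi r n is}"
proof -
  have "{is. mi r n is} = {xs. set xs \<subseteq> {..<r} \<and> length xs = n}" unfolding mi_def by auto
  then show ?thesis using finite_lists_length_eq[of "{..<r}" n] by simp
qed

lemma approx:
  fixes T :: "(real list \<Rightarrow> nat list \<Rightarrow> complex) set"
  assumes phi: "Cc r n \<phi>"
    and Tadd: "\<And>a b. a \<in> T \<Longrightarrow> b \<in> T \<Longrightarrow> (\<lambda>ys is. a ys is + b ys is) \<in> T"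
    and Tscale: "\<And>a c. a \<in> T \<Longrightarrow> (\<lambda>ys is. c * a ys is) \<in> T"
    and Tzero: "(\<lambda>ys is. 0) \<in> T"
    and Ttens: "\<And>\<phi>s. length \<phi>s = n \<Longrightarrow> \<forall>\<phi>\<in>set \<phi>s. Cc1_real r \<phi> \<Longrightarrow> tens \<phi>s \<in> T"
  shows "\<exists>D. \<forall>e>0. \<exists>\<psi>\<in>T.
     (\<forall>ys is. length ys = n \<longrightarrow> (\<exists>y\<in>set ys. D < \<bar>y\<bar>) \<longrightarrow> \<psi> ys is = 0 \<and> (mi r n is \<longrightarrow> \<phi> ys is = 0)) \<and>
     (\<forall>ys is. length ys = n \<longrightarrow> mi r n is \<longrightarrow> cmod (\<psi> ys is - \<phi> ys is) < e)"
proof -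
  have TaddO: "\<forall>a\<in>T. \<forall>b\<in>T. (\<lambda>ys is. a ys is + b ys is) \<in> T" using Tadd by blast
  define I where "I = {is. mi r n is}"
  have finI: "finite I" unfolding I_def by (rule finite_mi)
  have "\<forall>is\<in>I. \<exists>C. \<forall>ys. length ys = n \<longrightarrow> (\<exists>y\<in>set ys. C < \<bar>y\<bar>) \<longrightarrow> \<phi> ys is = 0"
    using phi unfolding Cc_def I_def by blast
  from bchoice[OF this] obtain Cf where Cf0: "\<forall>is\<in>I. \<forall>ys. length ys = n \<longrightarrow> (\<exists>y\<in>set ys. Cf is < \<bar>y\<bar>) \<longrightarrow> \<phi> ys is = 0"
    by blast
  have Cf: "\<phi> ys is = 0" if "is \<in> I" "length ys = n" "\<exists>y\<in>set ys. Cf is < \<bar>y\<bar>" for "is" ys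
    using Cf0 that by blast
  define D0 where "D0 = (\<Sum>is\<in>I. \<bar>Cf is\<bar>)"
  have CD0: "Cf is \<le> D0" if "is \<in> I" for "is"
  proof -
    have "Cf is \<le> \<bar>Cf is\<bar>" by simp
    also have "\<dots> \<le> D0" unfolding D0_def by (rule member_le_sum) (use that finI in auto)
    finally show ?thesis .
  qed
  define D where "D = D0 + 1"
  have phi0: "\<phi> ys is = 0" if H: "length ys = n" "mi r n is" "\<exists>y\<in>set ys. D0 < \<bar>y\<bar>" for ys "is"
  proof -
    have "is \<in> I" using H I_def by auto
    obtain y where y: "y \<in> set ys" "D0 < \<bar>y\<bar>" using H(3) by blast
    have "Cf is < \<bar>y\<bar>" using CD0[OF \<open>is \<in> I\<close>] y(2) by linarith
    then show ?thesis using Cf[OF \<open>is \<in> I\<close> H(1)] y(1) by blast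
  qed
  have chiphi: "complex_of_real (chi n D ys) * \<phi> ys is = \<phi> ys is" if "length ys = n" "mi r n is" for ys "is"
  proof (cases "\<exists>y\<in>set ys. D0 < \<bar>y\<bar>")
    case True then show ?thesis using phi0 that by simp
  next
    case False
    then have "\<forall>y\<in>set ys. \<bar>y\<bar> \<le> D - 1" by (auto simp: D_def not_less)
    then have "chi n D ys = 1" using chi_in[of ys n D] that(1) by blast
    then show ?thesis by simp
  qed
  show ?thesis
  proof (intro exI[of _ D] allI impI)
    fix e :: real assume e: "0 < e"
    have RR: "\<exists>G. G \<in> Rg n \<and> (\<forall>v\<in>boxn n D. \<bar>f v - G v\<bar> < e/2)" if "continuous_on (boxn n D) f" for f
    proof (rule Rg_ring[OF compact_box _ that])
      show "0 < e/2" using e by simp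
    next
      fix v k assume "v \<in> boxn n D" "n \<le> k" then show "v k = 0" by (rule box_zero)
    qed
    define FR where "FR is0 v = Re (\<phi> (map v [0..<n]) is0)" for is0 v
    define FI where "FI is0 v = Im (\<phi> (map v [0..<n]) is0)" for is0 v
    have cphi: "continuous_on UNIV (\<lambda>v::nat\<Rightarrow>real. \<phi> (map v [0..<n]) is0)" if "is0 \<in> I" for is0
    proof -
      have "mi r n is0" using that I_def by simp
      from phi[unfolded Cc_def, rule_format, OF this] show ?thesis by (rule conjunct1)
    qed
    have "\<forall>is0\<in>I. \<exists>G. G \<in> Rg n \<and> (\<forall>v\<in>boxn n D. \<bar>FR is0 v - G v\<bar> < e/2)"
    proof
      fix is0 assume "is0 \<in> I"
      have "continuous_on UNIV (FR is0)" unfolding FR_def by (rule continuous_on_Re[OF cphi[OF \<open>is0 \<in> I\<close>]])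
      then have "continuous_on (boxn n D) (FR is0)" by (rule continuous_on_subset[OF _ subset_UNIV])
      then show "\<exists>G. G \<in> Rg n \<and> (\<forall>v\<in>boxn n D. \<bar>FR is0 v - G v\<bar> < e/2)"
        by (rule RR)
    qed
    from bchoice[OF this] obtain GR where GR0: "\<forall>is0\<in>I. GR is0 \<in> Rg n \<and> (\<forall>v\<in>boxn n D. \<bar>FR is0 v - GR is0 v\<bar> < e/2)" by blast
    then have GR: "\<And>is0. is0 \<in> I \<Longrightarrow> GR is0 \<in> Rg n"
      "\<And>is0 v. is0 \<in> I \<Longrightarrow> v \<in> boxn n D \<Longrightarrow> \<bar>FR is0 v - GR is0 v\<bar> < e/2" by blast+
    have "\<forall>is0\<in>I. \<exists>G. G \<in> Rg n \<and> (\<forall>v\<in>boxn n D. \<bar>FI is0 v - G v\<bar> < e/2)"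
    proof
      fix is0 assume "is0 \<in> I"
      have "continuous_on UNIV (FI is0)" unfolding FI_def by (rule continuous_on_Im[OF cphi[OF \<open>is0 \<in> I\<close>]])
      then have "continuous_on (boxn n D) (FI is0)" by (rule continuous_on_subset[OF _ subset_UNIV])
      then show "\<exists>G. G \<in> Rg n \<and> (\<forall>v\<in>boxn n D. \<bar>FI is0 v - G v\<bar> < e/2)"
        by (rule RR)
    qed
    from bchoice[OF this] obtain GI where GI0: "\<forall>is0\<in>I. GI is0 \<in> Rg n \<and> (\<forall>v\<in>boxn n D. \<bar>FI is0 v - GI is0 v\<bar> < e/2)" by blast
    then have GI: "\<And>is0. is0 \<in> I \<Longrightarrow> GI is0 \<in> Rg n"
      "\<And>is0 v. is0 \<in> I \<Longrightarrow> v \<in> boxn n D \<Longrightarrow> \<bar>FI is0 v - GI is0 v\<bar> < e/2" by blast+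
    define \<psi> where "\<psi> = (\<lambda>ys is. \<Sum>is0\<in>I. KK n D (GR is0) is0 ys is + \<i> * KK n D (GI is0) is0 ys is)"
    have "\<forall>is0\<in>I. (\<lambda>ys is. KK n D (GR is0) is0 ys is + \<i> * KK n D (GI is0) is0 ys is) \<in> T"
    proof
      fix is0 assume "is0 \<in> I"
      show "(\<lambda>ys is. KK n D (GR is0) is0 ys is + \<i> * KK n D (GI is0) is0 ys is) \<in> T"
      proof -
        have a: "KK n D (GR is0) is0 \<in> T" by (rule KK_T[OF Tadd Tscale Tzero Ttens GR(1)[OF \<open>is0 \<in> I\<close>]])
        have b: "KK n D (GI is0) is0 \<in> T" by (rule KK_T[OF Tadd Tscale Tzero Ttens GI(1)[OF \<open>is0 \<in> I\<close>]])
        have c: "(\<lambda>ys is. \<i> * KK n D (GI is0) is0 ys is) \<in> T" by (rule Tscale[OF b])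
        show ?thesis by (rule Tadd[OF a c])
      qed
    qed
    from T_sum[OF TaddO Tzero finI this] have "\<psi> \<in> T" unfolding \<psi>_def .
    moreover have supp: "\<psi> ys is = 0 \<and> (mi r n is \<longrightarrow> \<phi> ys is = 0)"
      if "length ys = n" "\<exists>y\<in>set ys. D < \<bar>y\<bar>" for ys "is"
    proof -
      have "chi n D ys = 0" using chi_out that by blast
      then have "\<psi> ys is = 0" unfolding \<psi>_def KK_def by simp
      moreover have "mi r n is \<longrightarrow> \<phi> ys is = 0" using phi0 that D_def by force
      ultimately show ?thesis by simp
    qed
    moreover have "cmod (\<psi> ys is - \<phi> ys is) < e" if len: "length ys = n" and mi: "mi r n is" for ys "is"
    proof (cases "\<exists>y\<in>set ys. D < \<bar>y\<bar>")
      case True then show ?thesis using supp[OF len True] mi e by simp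
    next
      case False
      have isI: "is \<in> I" using mi I_def by simp
      have eqi: "(\<forall>k<n. is!k = is0!k) \<longleftrightarrow> is0 = is" if "is0 \<in> I" for is0
        using that mi unfolding I_def mi_def by (auto intro: nth_equalityI)
      have "\<psi> ys is = (\<Sum>is0\<in>I. if is0 = is then complex_of_real (chi n D ys * GR is0 (Pl n ys))
               + \<i> * complex_of_real (chi n D ys * GI is0 (Pl n ys)) else 0)"
        unfolding \<psi>_def KK_def by (intro sum.cong refl) (simp add: eqi)
      also have "\<dots> = complex_of_real (chi n D ys * GR is (Pl n ys)) + \<i> * complex_of_real (chi n D ys * GI is (Pl n ys))"
        using finI isI by (simp add: sum.delta')
      finally have psi_eq: "\<psi> ys is = complex_of_real (chi n D ys * GR is (Pl n ys)) + \<i> * complex_of_real (chi n D ys * GI is (Pl n ys))" .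
      have bnd: "-D \<le> ys!k \<and> ys!k \<le> D" if "k < n" for k
      proof -
        have "ys!k \<in> set ys" using that len by simp
        then have "\<bar>ys!k\<bar> \<le> D" using False by (meson not_less)
        then show ?thesis by linarith
      qed
      have inbox: "Pl n ys \<in> boxn n D"
        using bnd unfolding boxn_def Pl_def by (auto simp: PiE_iff)
      have mapPl: "map (Pl n ys) [0..<n] = ys" using len by (auto intro!: nth_equalityI simp: Pl_def)
      have e1: "complex_of_real (chi n D ys) * \<phi> ys is = \<phi> ys is" using chiphi len mi by simp
      have e2: "complex_of_real (Re (\<phi> ys is)) + \<i> * complex_of_real (Im (\<phi> ys is)) = \<phi> ys is"
        by (rule complex_eq[symmetric])
      have "complex_of_real (chi n D ys * FR is (Pl n ys)) + \<i> * complex_of_real (chi n D ys * FI is (Pl n ys))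
          = complex_of_real (chi n D ys) * (complex_of_real (Re (\<phi> ys is)) + \<i> * complex_of_real (Im (\<phi> ys is)))"
        unfolding FR_def FI_def mapPl by (simp add: algebra_simps)
      also have "\<dots> = \<phi> ys is" using e1 e2 by simp
      finally have phi_eq: "\<phi> ys is = complex_of_real (chi n D ys * FR is (Pl n ys)) + \<i> * complex_of_real (chi n D ys * FI is (Pl n ys))"
        by simp
      have "\<psi> ys is - \<phi> ys is = complex_of_real (chi n D ys * (GR is (Pl n ys) - FR is (Pl n ys)))
              + \<i> * complex_of_real (chi n D ys * (GI is (Pl n ys) - FI is (Pl n ys)))"
        unfolding psi_eq phi_eq by (simp add: algebra_simps)
      then have "cmod (\<psi> ys is - \<phi> ys is) \<le> \<bar>chi n D ys * (GR is (Pl n ys) - FR is (Pl n ys))\<bar>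
              + \<bar>chi n D ys * (GI is (Pl n ys) - FI is (Pl n ys))\<bar>"
        by (metis (no_types, lifting) norm_triangle_ineq norm_of_real norm_mult norm_ii mult_1)
      also have "\<dots> \<le> \<bar>GR is (Pl n ys) - FR is (Pl n ys)\<bar> + \<bar>GI is (Pl n ys) - FI is (Pl n ys)\<bar>"
        using chi_bounds[of n D ys]
        by (intro add_mono) (auto simp: abs_mult intro!: mult_left_le_one_le)
      also have "\<dots> < e/2 + e/2"
        using GR(2)[OF isI inbox] GI(2)[OF isI inbox] by (intro add_strict_mono) (auto simp: abs_minus_commute)
      finally show ?thesis by simp
    qed
    ultimately show "\<exists>\<psi>\<in>T. (\<forall>ys is. length ys = n \<longrightarrow> (\<exists>y\<in>set ys. D < \<bar>y\<bar>) \<longrightarrow> \<psi> ys is = 0 \<and> (mi r n is \<longrightarrow> \<phi> ys is = 0)) \<and>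
       (\<forall>ys is. length ys = n \<longrightarrow> mi r n is \<longrightarrow> cmod (\<psi> ys is - \<phi> ys is) < e)"
      by blast
  qed
qed

lemma dens:
  fixes \<tau>1 \<tau>2 :: "('z::euclidean_space) mterm \<Rightarrow> complex"
  assumes st1: "mcr_state r Q \<tau>1" and st2: "mcr_state r Q \<tau>2"
    and ct1: "mcr_cont r \<tau>1" and ct2: "mcr_cont r \<tau>2"
    and len: "length gs = length s" and gL2: "\<forall>g\<in>set gs. L2 g"
    and phi: "Cc r (length s) \<phi>"
    and H: "\<And>\<phi>s. length \<phi>s = length s \<Longrightarrow> \<forall>\<phi>\<in>set \<phi>s. Cc1_real r \<phi> \<Longrightarrow>
              \<tau>1 (s, prodker (tens \<phi>s) gs) = \<tau>2 (s, prodker (tens \<phi>s) gs)"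
  shows "\<tau>1 (s, prodker \<phi> gs) = \<tau>2 (s, prodker \<phi> gs)"
proof -
  define n where "n = length s"
  define T where "T = {\<psi>. Cc r n \<psi> \<and> \<tau>1 (s, prodker \<psi> gs) = \<tau>2 (s, prodker \<psi> gs)}"
  have FP: "prodker \<psi> gs \<in> Fsp r (length s)" if "Cc r n \<psi>" for \<psi>
    using Fsp_prodker[of r n \<psi> gs] that len gL2 n_def by simp
  have Tadd: "(\<lambda>ys is. a ys is + b ys is) \<in> T" if "a \<in> T" "b \<in> T" for a b
  proof -
    have ca: "Cc r n a" and cb: "Cc r n b" using that T_def by auto
    have eq: "prodker (\<lambda>ys is. a ys is + b ys is) gs = (\<lambda>xs is. prodker a gs xs is + prodker b gs xs is)"
      by (auto simp: prodker_def algebra_simps)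
    show ?thesis using that Cc_add[OF ca cb] unfolding T_def
      by (simp add: eq state_add[OF st1 FP[OF ca] FP[OF cb]] state_add[OF st2 FP[OF ca] FP[OF cb]])
  qed
  have Tscale: "(\<lambda>ys is. c * a ys is) \<in> T" if "a \<in> T" for a c
  proof -
    have ca: "Cc r n a" using that T_def by auto
    have eq: "prodker (\<lambda>ys is. c * a ys is) gs = (\<lambda>xs is. c * prodker a gs xs is)"
      by (auto simp: prodker_def algebra_simps)
    show ?thesis using that Cc_scale[OF ca] unfolding T_def
      by (simp add: eq state_scale[OF st1 FP[OF ca]] state_scale[OF st2 FP[OF ca]])
  qed
  have Tzero: "(\<lambda>ys is. 0) \<in> T"
  proof -
    have c0: "Cc r n (\<lambda>ys is. 0)" by (rule Cc_zero)
    have eq: "(\<lambda>xs is. 0 * prodker (\<lambda>ys is. 0) gs xs is) = prodker (\<lambda>ys is. 0) gs"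
      by (auto simp: prodker_def)
    have "\<tau>1 (s, prodker (\<lambda>ys is. 0) gs) = 0"
      using state_scale[OF st1 FP[OF c0], of 0] unfolding eq by simp
    moreover have "\<tau>2 (s, prodker (\<lambda>ys is. 0) gs) = 0"
      using state_scale[OF st2 FP[OF c0], of 0] unfolding eq by simp
    ultimately show ?thesis using c0 unfolding T_def by simp
  qed
  have Ttens: "tens \<phi>s \<in> T" if "length \<phi>s = n" "\<forall>\<phi>\<in>set \<phi>s. Cc1_real r \<phi>" for \<phi>s
  proof -
    have "Cc r n (tens \<phi>s)" using Cc_tens[of \<phi>s r] that unfolding Cc1_real_def by auto
    then show ?thesis using H[of \<phi>s] that n_def T_def by auto
  qed
  obtain D where D: "\<forall>e>0. \<exists>\<psi>\<in>T.
     (\<forall>ys is. length ys = n \<longrightarrow> (\<exists>y\<in>set ys. D < \<bar>y\<bar>) \<longrightarrow> \<psi> ys is = 0 \<and> (mi r n is \<longrightarrow> \<phi> ys is = 0)) \<and>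
     (\<forall>ys is. length ys = n \<longrightarrow> mi r n is \<longrightarrow> cmod (\<psi> ys is - \<phi> ys is) < e)"
    using approx[of r n \<phi> T, OF phi[folded n_def] Tadd Tscale Tzero Ttens] by blast
  have "\<forall>k::nat. \<exists>\<psi>. \<psi> \<in> T \<and>
     (\<forall>ys is. length ys = n \<longrightarrow> (\<exists>y\<in>set ys. D < \<bar>y\<bar>) \<longrightarrow> \<psi> ys is = 0 \<and> (mi r n is \<longrightarrow> \<phi> ys is = 0)) \<and>
     (\<forall>ys is. length ys = n \<longrightarrow> mi r n is \<longrightarrow> cmod (\<psi> ys is - \<phi> ys is) < 1 / (Suc k))"
    using D by (metis of_nat_0_less_iff zero_less_Suc divide_pos_pos zero_less_one)
  from choice[OF this] obtain \<Psi> where Psi0: "\<forall>k. \<Psi> k \<in> T \<and>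
     (\<forall>ys is. length ys = n \<longrightarrow> (\<exists>y\<in>set ys. D < \<bar>y\<bar>) \<longrightarrow> \<Psi> k ys is = 0 \<and> (mi r n is \<longrightarrow> \<phi> ys is = 0)) \<and>
     (\<forall>ys is. length ys = n \<longrightarrow> mi r n is \<longrightarrow> cmod (\<Psi> k ys is - \<phi> ys is) < 1 / (Suc k))" by blast
  then have Psi: "\<And>k. \<Psi> k \<in> T"
    "\<And>k ys is. length ys = n \<Longrightarrow> (\<exists>y\<in>set ys. D < \<bar>y\<bar>) \<Longrightarrow> \<Psi> k ys is = 0 \<and> (mi r n is \<longrightarrow> \<phi> ys is = 0)"
    "\<And>k ys is. length ys = n \<Longrightarrow> mi r n is \<Longrightarrow> cmod (\<Psi> k ys is - \<phi> ys is) < 1 / (Suc k)"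
    by blast+
  have cc: "\<forall>k. Cc r (length s) (\<Psi> k)" using Psi(1) T_def n_def by auto
  have bd: "\<exists>C. \<forall>k ys is. length ys = length s \<longrightarrow> mi r (length s) is \<longrightarrow>
               (\<exists>y\<in>set ys. C < \<bar>y\<bar>) \<longrightarrow> \<Psi> k ys is = 0 \<and> \<phi> ys is = 0"
    using Psi(2) n_def by blast
  have un: "\<forall>\<epsilon>>0. \<exists>N. \<forall>k\<ge>N. \<forall>ys is. length ys = length s \<longrightarrow> mi r (length s) is \<longrightarrow>
               cmod (\<Psi> k ys is - \<phi> ys is) < \<epsilon>"
  proof (intro allI impI)
    fix \<epsilon> :: real assume "0 < \<epsilon>"
    then obtain N :: nat where N: "1 / \<epsilon> < N" using reals_Archimedean2 by blast
    show "\<exists>N. \<forall>k\<ge>N. \<forall>ys is. length ys = length s \<longrightarrow> mi r (length s) is \<longrightarrow> cmod (\<Psi> k ys is - \<phi> ys is) < \<epsilon>"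
    proof (intro exI[of _ N] allI impI)
      fix k :: nat and ys :: "real list" and "is" :: "nat list" assume k: "N \<le> k" and l: "length ys = length s" and m: "mi r (length s) is"
      have "1 / \<epsilon> < real (Suc k)" using N k by simp
      then have "1 / real (Suc k) < \<epsilon>" using \<open>0 < \<epsilon>\<close>
        by (simp add: divide_less_eq mult.commute)
      then show "cmod (\<Psi> k ys is - \<phi> ys is) < \<epsilon>" using Psi(3)[of ys "is" k] l m n_def by fastforce
    qed
  qed
  have l1: "(\<lambda>k. \<tau>1 (s, prodker (\<Psi> k) gs)) \<longlonglongrightarrow> \<tau>1 (s, prodker \<phi> gs)"
    by (rule ct1[unfolded mcr_cont_def, rule_format, OF len gL2[rule_format] cc[rule_format] phi bd un[rule_format]])
  have l2: "(\<lambda>k. \<tau>2 (s, prodker (\<Psi> k) gs)) \<longlonglongrightarrow> \<tau>2 (s, prodker \<phi> gs)"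
    by (rule ct2[unfolded mcr_cont_def, rule_format, OF len gL2[rule_format] cc[rule_format] phi bd un[rule_format]])
  have "(\<lambda>k. \<tau>1 (s, prodker (\<Psi> k) gs)) = (\<lambda>k. \<tau>2 (s, prodker (\<Psi> k) gs))"
    using Psi(1) T_def by auto
  then show ?thesis using l1 l2 LIMSEQ_unique by metis
qed

lemma length_lswap[simp]: "length (lswap i xs) = length xs"
  by (simp add: lswap_def)

definition sw :: "nat \<Rightarrow> nat \<Rightarrow> nat" where
  "sw i k = (if k = i then Suc i else if k = Suc i then i else k)"

lemma sw_sw[simp]: "sw i (sw i k) = k"
  by (auto simp: sw_def)

lemma sw_less: "Suc i < n \<Longrightarrow> k < n \<Longrightarrow> sw i k < n"
  by (auto simp: sw_def)

lemma lswap_nth: "Suc i < length xs \<Longrightarrow> k < length xs \<Longrightarrow> lswap i xs ! k = xs ! sw i k"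
  by (auto simp: lswap_def sw_def nth_list_update)

lemma map_lswap: "Suc i < length xs \<Longrightarrow> map f (lswap i xs) = lswap i (map f xs)"
  by (simp add: lswap_def map_update)

lemma set_lswap: "Suc i < length xs \<Longrightarrow> set (lswap i xs) = set xs"
  unfolding lswap_def by (rule set_swap) auto

lemma lswap_map_upt: "Suc i < n \<Longrightarrow> lswap i (map v [0..<n]) = map (\<lambda>k. v (sw i k)) [0..<n]"
  by (rule nth_equalityI) (auto simp: lswap_nth sw_less)

lemma prod_sw:
  assumes "Suc i < n"
  shows "(\<Prod>m<n. F m (sw i m)) = (\<Prod>m<n. F (sw i m) m)"
  by (rule prod.reindex_bij_witness[of _ "sw i" "sw i"]) (use assms in \<open>auto simp: sw_less\<close>)

definition Qphi :: "nat \<Rightarrow> (real \<Rightarrow> real \<Rightarrow> op2) \<Rightarrow> nat \<Rightarrow> (real list \<Rightarrow> vec) \<Rightarrow> real list \<Rightarrow> vec" where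
  "Qphi r M i \<phi> = (\<lambda>ys is. op_at r i (M (ys!i) (ys!Suc i)) (\<phi> (lswap i ys)) is)"

lemma Qker_prodker:
  assumes "Suc i < length gs" "length xs = length gs"
  shows "Qker r M i (prodker \<phi> gs) xs is = prodker (Qphi r M i \<phi>) (lswap i gs) xs is"
proof -
  have G: "(\<Prod>m<length gs. (gs!m) (snd (lswap i xs ! m))) = (\<Prod>m<length gs. (lswap i gs ! m) (snd (xs!m)))"
  proof -
    have "(\<Prod>m<length gs. (gs!m) (snd (lswap i xs ! m))) = (\<Prod>m<length gs. (gs!m) (snd (xs ! sw i m)))"
      using assms by (intro prod.cong refl) (simp add: lswap_nth)
    also have "\<dots> = (\<Prod>m<length gs. (gs!sw i m) (snd (xs ! m)))"
      using prod_sw[OF assms(1), of "\<lambda>a b. (gs!a) (snd (xs!b))"] by simp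
    also have "\<dots> = (\<Prod>m<length gs. (lswap i gs ! m) (snd (xs!m)))"
      using assms by (intro prod.cong refl) (simp add: lswap_nth)
    finally show ?thesis .
  qed
  have F: "map fst (lswap i xs) = lswap i (map fst xs)" by (rule map_lswap) (use assms in simp)
  show ?thesis
    unfolding Qker_def prodker_def Qphi_def op_at_def
    using assms by (simp add: F G sum_distrib_right mult.assoc)
qed

lemma Cc_ubound:
  assumes "Cc r n \<phi>"
  shows "\<exists>C. \<forall>is ys. mi r n is \<longrightarrow> length ys = n \<longrightarrow> (\<exists>y\<in>set ys. C < \<bar>y\<bar>) \<longrightarrow> \<phi> ys is = 0"
proof -
  define I where "I = {is. mi r n is}"
  have finI: "finite I" unfolding I_def by (rule finite_mi)
  have "\<forall>is\<in>I. \<exists>C. \<forall>ys. length ys = n \<longrightarrow> (\<exists>y\<in>set ys. C < \<bar>y\<bar>) \<longrightarrow> \<phi> ys is = 0"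
    using assms unfolding Cc_def I_def by blast
  from bchoice[OF this] obtain Cf where Cf0: "\<forall>is\<in>I. \<forall>ys. length ys = n \<longrightarrow> (\<exists>y\<in>set ys. Cf is < \<bar>y\<bar>) \<longrightarrow> \<phi> ys is = 0"
    by blast
  define D0 where "D0 = (\<Sum>is\<in>I. \<bar>Cf is\<bar>)"
  have CD0: "Cf is \<le> D0" if "is \<in> I" for "is"
  proof -
    have "Cf is \<le> \<bar>Cf is\<bar>" by simp
    also have "\<dots> \<le> D0" unfolding D0_def by (rule member_le_sum) (use that finI in auto)
    finally show ?thesis .
  qed
  show ?thesis
  proof (intro exI[of _ D0] allI impI)
    fix "is" ys assume mi: "mi r n is" and l: "length ys = n" and ex: "\<exists>y\<in>set ys. D0 < \<bar>y\<bar>"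
    have isI: "is \<in> I" using mi I_def by simp
    obtain y where y: "y \<in> set ys" "D0 < \<bar>y\<bar>" using ex by blast
    have "Cf is < \<bar>y\<bar>" using CD0[OF isI] y(2) by linarith
    then show "\<phi> ys is = 0" using Cf0 isI l y(1) by blast
  qed
qed

lemma mi_update2: "mi r n is \<Longrightarrow> k < r \<Longrightarrow> l < r \<Longrightarrow> mi r n (is[i := k, Suc i := l])"
  unfolding mi_def by (auto dest!: set_update_subset_insert[THEN subsetD])

lemma Cc_Qphi:
  assumes phi: "Cc r n \<phi>" and i: "Suc i < n"
    and M: "\<And>a b c d. a < r \<Longrightarrow> b < r \<Longrightarrow> c < r \<Longrightarrow> d < r \<Longrightarrow>
              continuous_on UNIV (\<lambda>p::real \<times> real. M (fst p) (snd p) a b c d)"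
  shows "Cc r n (Qphi r M i \<phi>)"
  unfolding Cc_def
proof (intro allI impI conjI)
  fix "is" assume mi: "mi r n is"
  have iir: "is!i < r" "is!Suc i < r" using mi i unfolding mi_def by auto
  have eq: "(\<lambda>v::nat\<Rightarrow>real. Qphi r M i \<phi> (map v [0..<n]) is) =
     (\<lambda>v. \<Sum>k<r. \<Sum>l<r. M (v i) (v (Suc i)) (is!i) (is!Suc i) k l * \<phi> (map (\<lambda>m. v (sw i m)) [0..<n]) (is[i := k, Suc i := l]))"
    using i by (simp add: Qphi_def op_at_def lswap_map_upt)
  have cM: "continuous_on UNIV (\<lambda>v::nat\<Rightarrow>real. M (v i) (v (Suc i)) (is!i) (is!Suc i) k l)" if "k < r" "l < r" for k l
  proof -
    have "continuous_on UNIV (\<lambda>v::nat\<Rightarrow>real. (v i, v (Suc i)))"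
      by (intro continuous_on_Pair continuous_on_product_coordinates)
    then show ?thesis
      using continuous_on_compose2[OF M[OF iir that], of UNIV "\<lambda>v::nat\<Rightarrow>real. (v i, v (Suc i))"] by auto
  qed
  have cP: "continuous_on UNIV (\<lambda>v::nat\<Rightarrow>real. \<phi> (map (\<lambda>m. v (sw i m)) [0..<n]) (is[i := k, Suc i := l]))"
    if "k < r" "l < r" for k l
  proof -
    have c1: "continuous_on UNIV (\<lambda>w::nat\<Rightarrow>real. \<phi> (map w [0..<n]) (is[i := k, Suc i := l]))"
      using phi mi_update2[OF mi that] unfolding Cc_def by blast
    have c2: "continuous_on UNIV (\<lambda>v::nat\<Rightarrow>real. (\<lambda>m. v (sw i m)))"
      by (intro continuous_on_coordinatewise_then_product continuous_on_product_coordinates)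
    show ?thesis using continuous_on_compose2[OF c1 c2] by auto
  qed
  show "continuous_on UNIV (\<lambda>v::nat\<Rightarrow>real. Qphi r M i \<phi> (map v [0..<n]) is)"
    unfolding eq by (intro continuous_on_sum continuous_on_mult cM cP) auto
next
  fix "is" assume mi: "mi r n is"
  obtain C where C: "\<forall>is ys. mi r n is \<longrightarrow> length ys = n \<longrightarrow> (\<exists>y\<in>set ys. C < \<bar>y\<bar>) \<longrightarrow> \<phi> ys is = 0"
    using Cc_ubound[OF phi] by blast
  show "\<exists>C. \<forall>ys. length ys = n \<longrightarrow> (\<exists>y\<in>set ys. C < \<bar>y\<bar>) \<longrightarrow> Qphi r M i \<phi> ys is = 0"
  proof (intro exI[of _ C] allI impI)
    fix ys :: "real list" assume l: "length ys = n" and ex: "\<exists>y\<in>set ys. C < \<bar>y\<bar>"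
    have "\<phi> (lswap i ys) (is[i := k, Suc i := l]) = 0" if "k < r" "l < r" for k l
      using C mi_update2[OF mi that] l ex set_lswap[of i ys] i by auto
    then show "Qphi r M i \<phi> ys is = 0" unfolding Qphi_def op_at_def by simp
  qed
qed

lemma contr_tens:
  assumes i: "Suc i < n" and l1: "length \<phi>s = n" and l2: "length gs = n"
    and l3: "length xs = n - 2" and l4: "length is = n - 2"
  shows "contr r i (prodker (tens \<phi>s) gs) xs is =
     prodker (\<lambda>ys is. (integral\<^sup>L lborel (\<lambda>x. \<Sum>k<r. (\<phi>s!i) (fst x) k * (gs!i) (snd x) * ((\<phi>s!Suc i) (fst x) k * (gs!Suc i) (snd x))))
                * tens (take i \<phi>s @ drop (Suc (Suc i)) \<phi>s) ys is)
       (take i gs @ drop (Suc (Suc i)) gs) xs is"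
proof -
  define A where "A = take i \<phi>s"
  define B where "B = drop (Suc (Suc i)) \<phi>s"
  define G where "G = take i gs"
  define H where "H = drop (Suc (Suc i)) gs"
  define a where "a = \<phi>s!i"
  define b where "b = \<phi>s!Suc i"
  define g where "g = gs!i"
  define h where "h = gs!Suc i"
  define X where "X = take i xs"
  define X' where "X' = drop i xs"
  define J where "J = take i is"
  define J' where "J' = drop i is"
  define c where "c = integral\<^sup>L lborel (\<lambda>x. \<Sum>k<r. a (fst x) k * g (snd x) * (b (fst x) k * h (snd x)))"
  have phis: "\<phi>s = A @ a # b # B"
    unfolding A_def B_def a_def b_def using i l1
    by (metis Cons_nth_drop_Suc Suc_lessD append_take_drop_id)
  have gss: "gs = G @ g # h # H"
    unfolding G_def H_def g_def h_def using i l2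
    by (metis Cons_nth_drop_Suc Suc_lessD append_take_drop_id)
  have lA: "length A = i" "length G = i" "length X = i" "length J = i"
    using i l1 l2 l3 l4 by (auto simp: A_def G_def X_def J_def)
  have lB: "length H = length B" "length X' = length B" "length J' = length B"
    using i l1 l2 l3 l4 by (auto simp: B_def H_def X'_def J'_def)
  have xs: "xs = X @ X'" and iss: "is = J @ J'" by (simp_all add: X_def X'_def J_def J'_def)
  have inner: "prodker (tens \<phi>s) gs (X @ x # x # X') (J @ k # k # J') =
      tk A G X J * tk B H X' J' * (a (fst x) k * g (snd x) * (b (fst x) k * h (snd x)))" for x k
  proof -
    have "prodker (tens \<phi>s) gs (X @ x # x # X') (J @ k # k # J') = tk \<phi>s gs (X @ x # x # X') (J @ k # k # J')"
      by (rule prodker_tens1) (use phis gss lA lB in auto)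
    also have "\<dots> = tk A G X J * tk (a # b # B) (g # h # H) (x # x # X') (k # k # J')"
      unfolding phis gss by (simp add: tk_append lA)
    finally show ?thesis by (simp add: algebra_simps)
  qed
  have "contr r i (prodker (tens \<phi>s) gs) xs is =
      integral\<^sup>L lborel (\<lambda>x. (tk A G X J * tk B H X' J') * (\<Sum>k<r. a (fst x) k * g (snd x) * (b (fst x) k * h (snd x))))"
    unfolding contr_def X_def[symmetric] X'_def[symmetric] J_def[symmetric] J'_def[symmetric]
    by (simp add: inner sum_distrib_left)
  also have "\<dots> = (tk A G X J * tk B H X' J') * c" unfolding c_def by (rule integral_mult_right_zero)
  also have "\<dots> = prodker (\<lambda>ys is. c * tens (A @ B) ys is) (G @ H) xs is"
  proof -
    have "prodker (\<lambda>ys is. c * tens (A @ B) ys is) (G @ H) xs is = c * tk (A @ B) (G @ H) xs is"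
      by (rule prodker_tens) (use phis gss lA lB xs iss in auto)
    also have "\<dots> = c * (tk A G X J * tk B H X' J')" unfolding xs iss by (simp add: tk_append lA)
    finally show ?thesis by simp
  qed
  finally show ?thesis unfolding c_def A_def B_def G_def H_def a_def b_def g_def h_def .
qed

lemma tk_agree:
  assumes "length \<psi>s = length \<phi>s" "length gs = length \<phi>s" "length xs = length \<phi>s" "mi r (length \<phi>s) is"
    "\<forall>k<length \<phi>s. \<forall>y j. j < r \<longrightarrow> (\<psi>s!k) y j = (\<phi>s!k) y j"
  shows "tk \<psi>s gs xs is = tk \<phi>s gs xs is"
  using assms unfolding mi_def by (simp add: tk_nth)

lemma Aword_state:
  fixes \<tau> :: "('z::euclidean_space) mterm \<Rightarrow> complex"
  assumes st: "mcr_state r Q \<tau>" and l1: "length \<phi>s = length s" and l2: "length gs = length s"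
    and l3: "length \<psi>s = length s"
    and c: "\<forall>\<phi>\<in>set \<phi>s. Cc1 r \<phi>" and g: "\<forall>g\<in>set gs. L2 g"
    and agree: "\<forall>k<length s. \<forall>y j. j < r \<longrightarrow> (\<psi>s!k) y j = (\<phi>s!k) y j"
  shows "\<tau> (Aword s \<psi>s gs) = \<tau> (s, prodker (tens \<phi>s) gs)"
proof -
  have A: "Aword s \<psi>s gs = (s, snd (Aword s \<psi>s gs))"
    using Aword_fst[OF l3 l2] by (metis prod.collapse)
  have F: "prodker (tens \<phi>s) gs \<in> Fsp r (length s)"
    using Fsp_prodker[OF Cc_tens[OF c]] l1 l2 g by simp
  have "\<tau> (s, prodker (tens \<phi>s) gs) = \<tau> (s, snd (Aword s \<psi>s gs))"
  proof (rule state_agree[OF st F])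
    fix xs :: "(real \<times> 'z) list" and "is" assume lx: "length xs = length s" and mi: "mi r (length s) is"
    have li: "length is = length s" using mi mi_def by simp
    have "prodker (tens \<phi>s) gs xs is = tk \<phi>s gs xs is" by (rule prodker_tens1) (use l1 l2 lx li in auto)
    also have "\<dots> = tk \<psi>s gs xs is" by (rule tk_agree[symmetric]) (use l1 l2 l3 lx mi agree in auto)
    also have "\<dots> = snd (Aword s \<psi>s gs) xs is" by (rule Aword_snd[symmetric]) (use l2 l3 lx li in auto)
    finally show "prodker (tens \<phi>s) gs xs is = snd (Aword s \<psi>s gs) xs is" .
  qed
  then show ?thesis using A by simp
qed

fun invc :: "bool list \<Rightarrow> nat" where
  "invc [] = 0"
| "invc (b#s) = (if b then 0 else length (filter id s)) + invc s"

lemma filter_lswap: "Suc j < length t \<Longrightarrow> length (filter id (lswap j t)) = length (filter id t)"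
proof -
  assume a: "Suc j < length t"
  have "mset (lswap j t) = mset t" unfolding lswap_def by (rule mset_swap) (use a in auto)
  then have "mset (filter id (lswap j t)) = mset (filter id t)" by (simp add: mset_filter)
  then show ?thesis by (metis size_mset)
qed

lemma inv_lswap: "Suc i < length s \<Longrightarrow> \<not> s!i \<Longrightarrow> s!Suc i \<Longrightarrow> invc (lswap i s) < invc s"
proof (induction s arbitrary: i)
  case Nil then show ?case by simp
next
  case (Cons b t)
  show ?case
  proof (cases i)
    case 0
    then obtain u where t: "t = True # u" using Cons by (cases t) auto
    have "b = False" using Cons 0 by simp
    then show ?thesis using 0 t by (simp add: lswap_def)
  next
    case (Suc j)
    have "lswap i (b#t) = b # lswap j t" using Suc by (simp add: lswap_def)
    moreover have "invc (lswap j t) < invc t" using Cons Suc by simp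
    moreover have "length (filter id (lswap j t)) = length (filter id t)"
      using Cons Suc by (intro filter_lswap) simp
    ultimately show ?thesis by simp
  qed
qed

lemma normal_form:
  "(\<forall>i. Suc i < length s \<longrightarrow> \<not> (\<not> s!i \<and> s!Suc i)) \<Longrightarrow> \<exists>m n. s = replicate m True @ replicate n False"
proof (induction s)
  case Nil then show ?case by (intro exI[of _ 0]) simp
next
  case (Cons b t)
  have "\<forall>i. Suc i < length t \<longrightarrow> \<not> (\<not> t!i \<and> t!Suc i)"
  proof (intro allI impI)
    fix i assume "Suc i < length t"
    then show "\<not> (\<not> t!i \<and> t!Suc i)" using Cons(2)[rule_format, of "Suc i"] by simp
  qed
  then obtain m n where t: "t = replicate m True @ replicate n False" using Cons(1) by blast
  show ?case
  proof (cases b)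
    case True
    then show ?thesis using t by (intro exI[of _ "Suc m"] exI[of _ n]) simp
  next
    case False
    have "m = 0"
    proof (rule ccontr)
      assume "m \<noteq> 0"
      then have "t!0" "0 < length t" using t by (auto simp: nth_append)
      then show False using Cons(2)[rule_format, of 0] False by simp
    qed
    then show ?thesis using t False by (intro exI[of _ 0] exI[of _ "Suc n"]) simp
  qed
qed

lemma zero_Fsp: "(\<lambda>xs is. 0) \<in> Fsp r n"
proof -
  have "(\<lambda>xs is. \<Sum>p\<leftarrow>[]. prodker (fst p) (snd p) xs is) \<in> Fsp r n"
    unfolding Fsp_def by (rule CollectI, rule exI[of _ "[]"]) simp
  then show ?thesis by simp
qed

lemma state_zero:
  assumes "mcr_state r Q \<tau>" shows "\<tau> (s, \<lambda>xs is. 0) = 0"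
proof -
  have "\<tau> (s, \<lambda>xs is. 0 * 0) = 0 * \<tau> (s, \<lambda>xs is. 0)"
    by (rule state_scale[OF assms zero_Fsp])
  then show ?thesis by simp
qed

lemma Fsp_reduce:
  fixes \<tau>1 \<tau>2 :: "('z::euclidean_space) mterm \<Rightarrow> complex"
  assumes st1: "mcr_state r Q \<tau>1" and st2: "mcr_state r Q \<tau>2"
    and f: "f \<in> Fsp r (length s)"
    and H: "\<And>\<phi> gs. Cc r (length s) \<phi> \<Longrightarrow> length gs = length s \<Longrightarrow> \<forall>g\<in>set gs. L2 g \<Longrightarrow>
             \<tau>1 (s, prodker \<phi> gs) = \<tau>2 (s, prodker \<phi> gs)"
  shows "\<tau>1 (s, f) = \<tau>2 (s, f)"
proof -
  obtain ps where ps: "\<forall>p\<in>set ps. Cc r (length s) (fst p) \<and> length (snd p) = length s \<and> (\<forall>g\<in>set (snd p). L2 g)"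
    and fe: "f = (\<lambda>xs is. \<Sum>p\<leftarrow>ps. prodker (fst p) (snd p) xs is)"
    using f unfolding Fsp_def by blast
  have "(\<lambda>xs is. \<Sum>p\<leftarrow>ps. prodker (fst p) (snd p) xs is) \<in> Fsp r (length s) \<and>
        \<tau>1 (s, \<lambda>xs is. \<Sum>p\<leftarrow>ps. prodker (fst p) (snd p) xs is) = \<tau>2 (s, \<lambda>xs is. \<Sum>p\<leftarrow>ps. prodker (fst p) (snd p) xs is)"
    using ps
  proof (induction ps)
    case Nil then show ?case using state_zero[OF st1] state_zero[OF st2] zero_Fsp by simp
  next
    case (Cons p ps)
    have p: "Cc r (length s) (fst p)" "length (snd p) = length s" "\<forall>g\<in>set (snd p). L2 g" using Cons(2) by auto
    have P: "prodker (fst p) (snd p) \<in> Fsp r (length s)" using Fsp_prodker[OF p(1) p(2) p(3)] .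
    have R: "(\<lambda>xs is. \<Sum>p\<leftarrow>ps. prodker (fst p) (snd p) xs is) \<in> Fsp r (length s)" and
         E: "\<tau>1 (s, \<lambda>xs is. \<Sum>p\<leftarrow>ps. prodker (fst p) (snd p) xs is) = \<tau>2 (s, \<lambda>xs is. \<Sum>p\<leftarrow>ps. prodker (fst p) (snd p) xs is)"
      using Cons by auto
    have F: "(\<lambda>xs is. \<Sum>p\<leftarrow>p#ps. prodker (fst p) (snd p) xs is) \<in> Fsp r (length s)"
      unfolding Fsp_def using Cons(2) by blast
    have eq: "(\<lambda>xs is. \<Sum>p\<leftarrow>p#ps. prodker (fst p) (snd p) xs is) =
              (\<lambda>xs is. prodker (fst p) (snd p) xs is + (\<Sum>p\<leftarrow>ps. prodker (fst p) (snd p) xs is))" by simp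
    show ?case using F unfolding eq
      using state_add[OF st1 P R] state_add[OF st2 P R] E H[OF p] by simp
  qed
  then show ?thesis using fe by simp
qed

lemma state_rel:
  assumes "mcr_state r Q \<tau>" "f \<in> Fsp r (length s)" "Suc i < length s" "\<not> s!i" "s!Suc i"
  shows "\<tau> (s, f) = \<tau> (lswap i s, Qker r (\<lambda>a b. Qtilde Q b a) i f) + \<tau> (take i s @ drop (Suc (Suc i)) s, contr r i f)"
proof -
  have "\<forall>s f i. f \<in> Fsp r (length s) \<longrightarrow> Suc i < length s \<longrightarrow>
        (s ! i \<and> s ! Suc i \<longrightarrow> \<tau> (s, f) = \<tau> (s, Qker r Q i f)) \<and>
        (\<not> s ! i \<and> \<not> s ! Suc i \<longrightarrow> \<tau> (s, f) = \<tau> (s, Qker r (Qhat r Q) i f)) \<and>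
        (\<not> s ! i \<and> s ! Suc i \<longrightarrow>
           \<tau> (s, f) = \<tau> (lswap i s, Qker r (\<lambda>a b. Qtilde Q b a) i f)
                     + \<tau> (take i s @ drop (Suc (Suc i)) s, contr r i f))"
    using assms(1) unfolding mcr_state_def by (elim conjE) assumption
  then show ?thesis using assms(2-5) by blast
qed

lemma Mt_cont:
  assumes "QYB r Q" "a < r" "b < r" "c < r" "d < r"
  shows "continuous_on UNIV (\<lambda>p::real \<times> real. (\<lambda>a b. Qtilde Q b a) (fst p) (snd p) a b c d)"
proof -
  have "\<forall>i<r. \<forall>j<r. \<forall>k<r. \<forall>l<r. continuous_on UNIV (\<lambda>p::real \<times> real. Q (fst p) (snd p) i j k l)"
    using assms(1) unfolding QYB_def by (rule conjunct1)
  then have c1: "continuous_on UNIV (\<lambda>p::real \<times> real. Q (fst p) (snd p) b d a c)"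
    using assms(2-5) by blast
  have c2: "continuous_on UNIV (\<lambda>p::real \<times> real. (snd p, fst p))"
    by (intro continuous_intros)
  show ?thesis using continuous_on_compose2[OF c1 c2] by (simp add: Qtilde_def)
qed

lemma core:
  fixes \<tau>1 \<tau>2 :: "('z::euclidean_space) mterm \<Rightarrow> complex"
  assumes QYB: "QYB r Q"
    and st1: "mcr_state r Q \<tau>1" and ct1: "mcr_cont r \<tau>1"
    and st2: "mcr_state r Q \<tau>2" and ct2: "mcr_cont r \<tau>2"
    and HN: "\<And>m n \<phi>s gs. 1 \<le> m + n \<Longrightarrow> length \<phi>s = m + n \<Longrightarrow> length gs = m + n \<Longrightarrow>
              \<forall>\<phi>\<in>set \<phi>s. Cc1_real r \<phi> \<Longrightarrow> \<forall>g\<in>set gs. L2 g \<Longrightarrow>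
              \<tau>1 (Aword (replicate m True @ replicate n False) \<phi>s gs)
            = \<tau>2 (Aword (replicate m True @ replicate n False) \<phi>s gs)"
  shows "\<forall>s f. length s = N \<longrightarrow> f \<in> Fsp r N \<longrightarrow> \<tau>1 (s, f) = \<tau>2 (s, f)"
proof (induction N rule: less_induct)
  case (less N)
  have OIH: "\<And>M s f. M < N \<Longrightarrow> length s = M \<Longrightarrow> f \<in> Fsp r M \<Longrightarrow> \<tau>1 (s, f) = \<tau>2 (s, f)"
    using less.IH by blast
  show ?case
  proof (cases "N = 0")
    case True
    show ?thesis
    proof (intro allI impI)
      fix s :: "bool list" and f :: "'z kernel" assume "length s = N" "f \<in> Fsp r N"
      then have "s = []" "f \<in> Fsp r 0" using True by auto
      then show "\<tau>1 (s, f) = \<tau>2 (s, f)" using state_nil[OF st1] state_nil[OF st2] by simp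
    qed
  next
    case False
    have "length s = N \<longrightarrow> (\<forall>f\<in>Fsp r N. \<tau>1 (s, f) = \<tau>2 (s, f))" for s
    proof (induction s rule: measure_induct_rule[where f=invc])
      case (less s)
      show ?case
      proof (intro impI ballI)
        assume ls: "length s = N"
        fix f :: "'z kernel" assume fF: "f \<in> Fsp r N"
        show "\<tau>1 (s, f) = \<tau>2 (s, f)"
        proof (rule Fsp_reduce[OF st1 st2])
          show "f \<in> Fsp r (length s)" using fF ls by simp
        next
          fix \<phi> and gs :: "('z \<Rightarrow> complex) list"
          assume \<phi>: "Cc r (length s) \<phi>" and lg: "length gs = length s" and gL: "\<forall>g\<in>set gs. L2 g"
          show "\<tau>1 (s, prodker \<phi> gs) = \<tau>2 (s, prodker \<phi> gs)"
          proof (rule dens[OF st1 st2 ct1 ct2 lg gL \<phi>])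
            fix \<phi>s assume l\<phi>: "length \<phi>s = length s" and r\<phi>: "\<forall>\<phi>\<in>set \<phi>s. Cc1_real r \<phi>"
            have c\<phi>: "\<forall>\<phi>\<in>set \<phi>s. Cc1 r \<phi>" using r\<phi> unfolding Cc1_real_def by blast
            define F where "F = prodker (tens \<phi>s) gs"
            have FF: "F \<in> Fsp r (length s)" unfolding F_def
              using Fsp_prodker[OF Cc_tens[OF c\<phi>]] l\<phi> lg gL by simp
            show "\<tau>1 (s, prodker (tens \<phi>s) gs) = \<tau>2 (s, prodker (tens \<phi>s) gs)"
            proof (cases "\<exists>i. Suc i < length s \<and> \<not> s!i \<and> s!Suc i")
              case True
              then obtain i where i: "Suc i < length s" "\<not> s!i" "s!Suc i" by blast
              define Mt where "Mt = (\<lambda>a b. Qtilde Q b a)"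
              define s' where "s' = take i s @ drop (Suc (Suc i)) s"
              define c where "c = integral\<^sup>L lborel (\<lambda>x::real \<times> 'z. \<Sum>k<r. (\<phi>s!i) (fst x) k * (gs!i) (snd x) * ((\<phi>s!Suc i) (fst x) k * (gs!Suc i) (snd x)))"
              define \<phi>s' where "\<phi>s' = take i \<phi>s @ drop (Suc (Suc i)) \<phi>s"
              define gs' where "gs' = take i gs @ drop (Suc (Suc i)) gs"
              have rel1: "\<tau>1 (s, F) = \<tau>1 (lswap i s, Qker r Mt i F) + \<tau>1 (s', contr r i F)"
                unfolding Mt_def s'_def by (rule state_rel[OF st1 FF i])
              have rel2: "\<tau>2 (s, F) = \<tau>2 (lswap i s, Qker r Mt i F) + \<tau>2 (s', contr r i F)"
                unfolding Mt_def s'_def by (rule state_rel[OF st2 FF i])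
              have cQ: "Cc r (length s) (Qphi r Mt i (tens \<phi>s))"
                using Cc_Qphi[OF Cc_tens[OF c\<phi>] _ Mt_cont[OF QYB]] i l\<phi> unfolding Mt_def by simp
              have FQ: "prodker (Qphi r Mt i (tens \<phi>s)) (lswap i gs) \<in> Fsp r (length (lswap i s))"
                using Fsp_prodker[OF cQ, of "lswap i gs"] lg gL set_lswap[of i gs] i by simp
              have q: "\<tau>j (lswap i s, prodker (Qphi r Mt i (tens \<phi>s)) (lswap i gs)) = \<tau>j (lswap i s, Qker r Mt i F)"
                if stj: "mcr_state r Q \<tau>j" for \<tau>j :: "'z mterm \<Rightarrow> complex"
              proof (rule state_agree[OF stj FQ])
                fix xs :: "(real \<times> 'z) list" and "is" assume "length xs = length (lswap i s)"
                then show "prodker (Qphi r Mt i (tens \<phi>s)) (lswap i gs) xs is = Qker r Mt i F xs is"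
                  unfolding F_def using Qker_prodker[of i gs xs r Mt "tens \<phi>s" "is"] i lg by simp
              qed
              have IHq: "\<tau>1 (lswap i s, prodker (Qphi r Mt i (tens \<phi>s)) (lswap i gs)) =
                         \<tau>2 (lswap i s, prodker (Qphi r Mt i (tens \<phi>s)) (lswap i gs))"
                using less.IH[OF inv_lswap[OF i]] FQ ls by simp
              have ls': "length s' = length s - 2" using i unfolding s'_def by simp
              have l\<phi>': "length \<phi>s' = length s - 2" using i l\<phi> unfolding \<phi>s'_def by simp
              have lg': "length gs' = length s - 2" using i lg unfolding gs'_def by simp
              have c\<phi>': "\<forall>\<phi>\<in>set \<phi>s'. Cc1 r \<phi>" using c\<phi> unfolding \<phi>s'_def
                by (auto dest: in_set_takeD in_set_dropD)
              have gL': "\<forall>g\<in>set gs'. L2 g" using gL unfolding gs'_def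
                by (auto dest: in_set_takeD in_set_dropD)
              have cC: "Cc r (length s') (\<lambda>ys is. c * tens \<phi>s' ys is)"
                using Cc_scale[OF Cc_tens[OF c\<phi>']] l\<phi>' ls' by simp
              have FC: "prodker (\<lambda>ys is. c * tens \<phi>s' ys is) gs' \<in> Fsp r (length s')"
                using Fsp_prodker[OF cC, of gs'] lg' ls' gL' by simp
              have cc: "\<tau>j (s', prodker (\<lambda>ys is. c * tens \<phi>s' ys is) gs') = \<tau>j (s', contr r i F)"
                if stj: "mcr_state r Q \<tau>j" for \<tau>j :: "'z mterm \<Rightarrow> complex"
              proof (rule state_agree[OF stj FC])
                fix xs :: "(real \<times> 'z) list" and "is" assume lx: "length xs = length s'" and mi: "mi r (length s') is"
                have li: "length is = length s'" using mi mi_def by simp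
                show "prodker (\<lambda>ys is. c * tens \<phi>s' ys is) gs' xs is = contr r i F xs is"
                  unfolding F_def c_def \<phi>s'_def gs'_def
                  by (rule contr_tens[symmetric, of i "length s"]) (use i l\<phi> lg lx li ls' in auto)
              qed
              have IHc: "\<tau>1 (s', prodker (\<lambda>ys is. c * tens \<phi>s' ys is) gs') = \<tau>2 (s', prodker (\<lambda>ys is. c * tens \<phi>s' ys is) gs')"
                by (rule OIH[of "length s'"]) (use FC ls' ls False in auto)
              show ?thesis
                using rel1 rel2 q[OF st1] q[OF st2] IHq cc[OF st1] cc[OF st2] IHc unfolding F_def by simp
            next
              case False
              then have "\<forall>i. Suc i < length s \<longrightarrow> \<not> (\<not> s!i \<and> s!Suc i)" by blast
              then obtain m n where s: "s = replicate m True @ replicate n False" using normal_form by blast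
              have mn: "1 \<le> m + n" using s ls \<open>N \<noteq> 0\<close> by simp
              have e: "\<tau>1 (Aword s \<phi>s gs) = \<tau>2 (Aword s \<phi>s gs)"
                unfolding s by (rule HN[OF mn]) (use l\<phi> lg s r\<phi> gL in auto)
              have a1: "\<tau>1 (Aword s \<phi>s gs) = \<tau>1 (s, prodker (tens \<phi>s) gs)"
                by (rule Aword_state[OF st1 l\<phi> lg l\<phi> c\<phi> gL]) simp
              have a2: "\<tau>2 (Aword s \<phi>s gs) = \<tau>2 (s, prodker (tens \<phi>s) gs)"
                by (rule Aword_state[OF st2 l\<phi> lg l\<phi> c\<phi> gL]) simp
              show ?thesis using e a1 a2 by simp
            qed
          qed
        qed
      qed
    qed
    then show ?thesis by blast
  qed
qed

fun sgl :: "nat \<Rightarrow> bool list list" where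
  "sgl 0 = [[]]"
| "sgl (Suc n) = map (Cons True) (sgl n) @ map (Cons False) (sgl n)"

lemma set_sgl: "length s = n \<Longrightarrow> s \<in> set (sgl n)"
proof (induction n arbitrary: s)
  case 0 then show ?case by simp
next
  case (Suc n)
  obtain b t where s: "s = b # t" "length t = n" using Suc.prems by (cases s) auto
  then show ?case using Suc.IH[OF s(2)] by (cases b) auto
qed

definition cf :: "(real \<Rightarrow> nat \<Rightarrow> complex) \<Rightarrow> real \<Rightarrow> nat \<Rightarrow> complex" where
  "cf \<phi> = (\<lambda>y k. cnj (\<phi> y k))"

definition cg :: "('z \<Rightarrow> complex) \<Rightarrow> 'z \<Rightarrow> complex" where
  "cg g = (\<lambda>z. cnj (g z))"

definition sel\<phi> :: "bool list \<Rightarrow> (real \<Rightarrow> nat \<Rightarrow> complex) list \<Rightarrow> (real \<Rightarrow> nat \<Rightarrow> complex) list" where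
  "sel\<phi> s \<phi>s = map (\<lambda>(b,\<phi>). if b then \<phi> else cf \<phi>) (zip s \<phi>s)"

definition selg :: "bool list \<Rightarrow> ('z \<Rightarrow> complex) list \<Rightarrow> ('z \<Rightarrow> complex) list" where
  "selg s gs = map (\<lambda>(b,g). if b then g else cg g) (zip s gs)"

definition wl :: "bool list \<Rightarrow> complex list \<Rightarrow> complex list" where
  "wl s cs = map (\<lambda>(b,c). if b then c else cnj c) (zip s cs)"

definition scl :: "complex list \<Rightarrow> ('z \<Rightarrow> complex) list \<Rightarrow> ('z \<Rightarrow> complex) list" where
  "scl cs gs = map (\<lambda>(c,g). \<lambda>z. c * g z) (zip cs gs)"

definition Asg :: "bool list \<Rightarrow> (real \<Rightarrow> nat \<Rightarrow> complex) list \<Rightarrow> ('z \<Rightarrow> complex) list \<Rightarrow> 'z mterm" where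
  "Asg s \<phi>s gs = Aword s (sel\<phi> s \<phi>s) (selg s gs)"

lemma Bword_Cons: "Bword (\<phi>#\<phi>s) (g#gs) = amul (Bop (ker1 \<phi> g)) (Bword \<phi>s gs)"
  by (simp add: Bword_def)

lemma Bword_sgl:
  "length gs = length \<phi>s \<Longrightarrow> Bword \<phi>s gs = map (\<lambda>s. Asg s \<phi>s gs) (sgl (length \<phi>s))"
proof (induction \<phi>s arbitrary: gs)
  case Nil then show ?case by (simp add: Bword_def Asg_def Aword_def sel\<phi>_def selg_def)
next
  case (Cons \<phi> \<phi>s)
  then obtain g gs' where gs: "gs = g # gs'" "length gs' = length \<phi>s" by (cases gs) auto
  have k: "(\<lambda>xs is. cnj (ker1 \<phi> g xs is)) = ker1 (cf \<phi>) (cg g)"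
    by (auto simp: ker1_def cf_def cg_def)
  have "Bword (\<phi>#\<phi>s) gs = map (tmul (Aop True (ker1 \<phi> g))) (Bword \<phi>s gs') @ map (tmul (Aop False (ker1 (cf \<phi>) (cg g)))) (Bword \<phi>s gs')"
    unfolding gs Bword_Cons by (simp add: amul_def Bop_def k)
  also have "\<dots> = map (\<lambda>s. Asg s (\<phi>#\<phi>s) gs) (sgl (length (\<phi>#\<phi>s)))"
    using Cons.IH[OF gs(2)] unfolding gs by (simp add: Asg_def Aword_Cons sel\<phi>_def selg_def)
  finally show ?case .
qed

lemma tauA_map: "tauA \<tau> (map f L) = (\<Sum>s\<leftarrow>L. \<tau> (f s))"
  by (simp add: tauA_def comp_def)

lemma selg_scl: "length cs = length s \<Longrightarrow> length gs = length s \<Longrightarrow> selg s (scl cs gs) = scl (wl s cs) (selg s gs)"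
proof (induction s arbitrary: cs gs)
  case Nil then show ?case by (simp add: selg_def scl_def wl_def)
next
  case (Cons b s)
  then obtain c cs' g gs' where e: "cs = c # cs'" "gs = g # gs'" by (cases cs; cases gs) auto
  then show ?case using Cons by (auto simp: selg_def scl_def wl_def cg_def)
qed

lemma selg_selg: "length gs = length s \<Longrightarrow> selg s (selg s gs) = gs"
proof (induction s arbitrary: gs)
  case Nil then show ?case by (simp add: selg_def)
next
  case (Cons b s)
  then obtain g gs' where e: "gs = g # gs'" by (cases gs) auto
  then show ?case using Cons by (auto simp: selg_def cg_def)
qed

lemma length_selg[simp]: "length (selg s gs) = min (length s) (length gs)"
  by (simp add: selg_def)
lemma length_sel\<phi>[simp]: "length (sel\<phi> s \<phi>s) = min (length s) (length \<phi>s)"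
  by (simp add: sel\<phi>_def)
lemma length_scl[simp]: "length (scl cs gs) = min (length cs) (length gs)"
  by (simp add: scl_def)
lemma length_wl[simp]: "length (wl s cs) = min (length s) (length cs)"
  by (simp add: wl_def)

lemma Aword_scl:
  "length \<psi>s = length s \<Longrightarrow> length hs = length s \<Longrightarrow> length ds = length s \<Longrightarrow>
   Aword s \<psi>s (scl ds hs) = (s, \<lambda>xs is. prod_list ds * snd (Aword s \<psi>s hs) xs is)"
proof (induction s arbitrary: \<psi>s hs ds)
  case Nil then show ?case by (simp add: Aword_def scl_def one_term_def)
next
  case (Cons b s)
  then obtain \<psi> \<psi>s' h hs' d ds' where e: "\<psi>s = \<psi> # \<psi>s'" "hs = h # hs'" "ds = d # ds'"
    by (cases \<psi>s; cases hs; cases ds) auto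
  have l: "length \<psi>s' = length s" "length hs' = length s" "length ds' = length s" using Cons e by auto
  have k: "ker1 \<psi> (\<lambda>z. d * h z) xs is = d * ker1 \<psi> h xs is" for xs "is"
    by (simp add: ker1_def)
  have "Aword (b#s) \<psi>s (scl ds hs) = tmul (Aop b (ker1 \<psi> (\<lambda>z. d * h z))) (Aword s \<psi>s' (scl ds' hs'))"
    unfolding e by (simp add: scl_def Aword_Cons)
  also have "\<dots> = (b # s, \<lambda>xs is. prod_list ds * snd (Aword (b#s) \<psi>s hs) xs is)"
    unfolding Cons.IH[OF l] e Aword_Cons using l
    by (simp add: tmul_def Aop_def k Aword_fst mult_ac)
  finally show ?case .
qed

lemma L2_cg: "L2 g \<Longrightarrow> L2 (cg g)"
proof -
  assume "L2 g"
  then have m: "g \<in> borel_measurable lborel" and i: "integrable lborel (\<lambda>z. (cmod (g z))\<^sup>2)" unfolding L2_def by auto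
  have "cg g \<in> borel_measurable lborel" unfolding cg_def
    by (rule borel_measurable_continuous_on[OF bounded_linear.continuous_on[OF bounded_linear_cnj continuous_on_id] m])
  then show ?thesis using i unfolding L2_def cg_def by simp
qed

lemma L2_scale: "L2 g \<Longrightarrow> L2 (\<lambda>z. c * g z)"
proof -
  assume "L2 g"
  then have m: "g \<in> borel_measurable lborel" and i: "integrable lborel (\<lambda>z. (cmod (g z))\<^sup>2)" unfolding L2_def by auto
  have "(\<lambda>z. c * g z) \<in> borel_measurable lborel" using m by measurable
  moreover have "integrable lborel (\<lambda>z. (cmod c)\<^sup>2 * (cmod (g z))\<^sup>2)" using i by (rule integrable_mult_right)
  ultimately show ?thesis unfolding L2_def by (simp add: norm_mult power_mult_distrib)
qed

lemma L2_selg: "\<forall>g\<in>set gs. L2 g \<Longrightarrow> \<forall>g\<in>set (selg s gs). L2 g"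
  unfolding selg_def by (auto dest!: set_zip_rightD intro!: L2_cg)

lemma L2_scl: "\<forall>g\<in>set gs. L2 g \<Longrightarrow> \<forall>g\<in>set (scl cs gs). L2 g"
  unfolding scl_def by (auto dest!: set_zip_rightD intro!: L2_scale)

lemma sel\<phi>_agree:
  assumes "length \<phi>s = length s" "\<forall>\<phi>\<in>set \<phi>s. Cc1_real r \<phi>"
  shows "\<forall>k<length s. \<forall>y j. j < r \<longrightarrow> (sel\<phi> s \<phi>s ! k) y j = (\<phi>s ! k) y j"
proof (intro allI impI)
  fix k y j assume k: "k < length s" and j: "j < r"
  have "Im ((\<phi>s!k) y j) = 0" using assms k j unfolding Cc1_real_def by (metis nth_mem)
  then show "(sel\<phi> s \<phi>s ! k) y j = (\<phi>s ! k) y j"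
    using k assms(1) by (auto simp: sel\<phi>_def cf_def complex_eq_iff)
qed

lemma wl_Cons[simp]: "wl (b#s) (c#cs) = (if b then c else cnj c) # wl s cs"
  by (simp add: wl_def)

lemma sgl_length: "s \<in> set (sgl n) \<Longrightarrow> length s = n"
  by (induction n arbitrary: s) auto

lemma extract_signs:
  "(\<And>cs. length cs = n \<Longrightarrow> set cs \<subseteq> {1, \<i>} \<Longrightarrow> (\<Sum>s\<leftarrow>sgl n. prod_list (wl s cs) * F s) = 0)
   \<Longrightarrow> s \<in> set (sgl n) \<Longrightarrow> F s = 0"
proof (induction n arbitrary: F s)
  case 0
  then have "s = []" by simp
  moreover have "(\<Sum>s\<leftarrow>sgl 0. prod_list (wl s []) * F s) = 0" using "0.prems"(1)[of "[]"] by simp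
  ultimately show ?case by (simp add: wl_def)
next
  case (Suc n)
  define ST where "ST cs = (\<Sum>t\<leftarrow>sgl n. prod_list (wl t cs) * F (True # t))" for cs
  define SF where "SF cs = (\<Sum>t\<leftarrow>sgl n. prod_list (wl t cs) * F (False # t))" for cs
  have split: "(\<Sum>s\<leftarrow>sgl (Suc n). prod_list (wl s (c#cs)) * F s) = c * ST cs + cnj c * SF cs" for c cs
    by (simp add: ST_def SF_def comp_def sum_list_const_mult[symmetric] mult.assoc)
  have both: "ST cs = 0 \<and> SF cs = 0" if "length cs = n" "set cs \<subseteq> {1, \<i>}" for cs
  proof -
    have "1 * ST cs + cnj 1 * SF cs = 0" using Suc.prems(1)[of "1 # cs"] that split[of 1 cs] by simp
    moreover have "\<i> * ST cs + cnj \<i> * SF cs = 0" using Suc.prems(1)[of "\<i> # cs"] that split[of \<i> cs] by simp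
    ultimately have "ST cs + SF cs = 0" "\<i> * (ST cs - SF cs) = 0" by (simp_all add: algebra_simps)
    then have s0: "ST cs + SF cs = 0" and "ST cs = SF cs" by auto
    then have "2 * ST cs = 0" by simp
    then show ?thesis using \<open>ST cs = SF cs\<close> by simp
  qed
  obtain t where t: "t \<in> set (sgl n)" "s = True # t \<or> s = False # t" using Suc.prems(2) by auto
  have T: "F (True # t) = 0"
    by (rule Suc.IH[of "\<lambda>t. F (True # t)" t]) (use both ST_def t in auto)
  have F: "F (False # t) = 0"
    by (rule Suc.IH[of "\<lambda>t. F (False # t)" t]) (use both SF_def t in auto)
  show ?case using t T F by auto
qed

lemma Asg_scale:
  fixes \<tau> :: "('z::euclidean_space) mterm \<Rightarrow> complex"
  assumes st: "mcr_state r Q \<tau>" and ls: "length s = N" and l\<phi>: "length \<phi>s = N" and lg: "length gs = N"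
    and lc: "length cs = N" and r\<phi>: "\<forall>\<phi>\<in>set \<phi>s. Cc1_real r \<phi>" and gL: "\<forall>g\<in>set gs. L2 g"
  shows "\<tau> (Asg s \<phi>s (scl cs gs)) = prod_list (wl s cs) * \<tau> (Asg s \<phi>s gs)"
proof -
  define W where "W = prod_list (wl s cs)"
  define hs where "hs = selg s gs"
  define \<psi>s where "\<psi>s = sel\<phi> s \<phi>s"
  have lh: "length hs = length s" and l\<psi>: "length \<psi>s = length s" using ls l\<phi> lg by (simp_all add: hs_def \<psi>s_def)
  have hL: "\<forall>g\<in>set hs. L2 g" unfolding hs_def by (rule L2_selg[OF gL])
  have c\<phi>: "\<forall>\<phi>\<in>set \<phi>s. Cc1 r \<phi>" using r\<phi> unfolding Cc1_real_def by blast
  have ag: "\<forall>k<length s. \<forall>y j. j < r \<longrightarrow> (\<psi>s ! k) y j = (\<phi>s ! k) y j"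
    unfolding \<psi>s_def by (rule sel\<phi>_agree) (use ls l\<phi> r\<phi> in auto)
  have l\<phi>': "length \<phi>s = length s" using ls l\<phi> by simp
  have A1: "Asg s \<phi>s (scl cs gs) = (s, \<lambda>xs is. W * snd (Aword s \<psi>s hs) xs is)"
    unfolding Asg_def W_def hs_def \<psi>s_def using ls l\<phi> lg lc
    by (simp add: selg_scl Aword_scl)
  have cW: "Cc r (length s) (\<lambda>ys is. W * tens \<phi>s ys is)" using Cc_scale[OF Cc_tens[OF c\<phi>]] l\<phi>' by simp
  have PW: "prodker (\<lambda>ys is. W * tens \<phi>s ys is) hs \<in> Fsp r (length s)" using Fsp_prodker[OF cW lh hL] .
  have P: "prodker (tens \<phi>s) hs \<in> Fsp r (length s)" using Fsp_prodker[OF Cc_tens[OF c\<phi>]] l\<phi>' lh hL by simp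
  have "\<tau> (s, prodker (\<lambda>ys is. W * tens \<phi>s ys is) hs) = \<tau> (s, \<lambda>xs is. W * snd (Aword s \<psi>s hs) xs is)"
  proof (rule state_agree[OF st PW])
    fix xs :: "(real \<times> 'z) list" and "is" assume lx: "length xs = length s" and mi: "mi r (length s) is"
    have li: "length is = length s" using mi mi_def by simp
    have "prodker (\<lambda>ys is. W * tens \<phi>s ys is) hs xs is = W * tk \<phi>s hs xs is"
      by (rule prodker_tens) (use l\<phi>' lh lx li in auto)
    also have "tk \<phi>s hs xs is = tk \<psi>s hs xs is" by (rule tk_agree[symmetric]) (use l\<phi>' lh l\<psi> lx mi ag in auto)
    also have "\<dots> = snd (Aword s \<psi>s hs) xs is" by (rule Aword_snd[symmetric]) (use lh l\<psi> lx li in auto)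
    finally show "prodker (\<lambda>ys is. W * tens \<phi>s ys is) hs xs is = W * snd (Aword s \<psi>s hs) xs is" .
  qed
  moreover have "prodker (\<lambda>ys is. W * tens \<phi>s ys is) hs = (\<lambda>xs is. W * prodker (tens \<phi>s) hs xs is)"
    by (auto simp: prodker_def mult.assoc)
  moreover have "\<tau> (s, \<lambda>xs is. W * prodker (tens \<phi>s) hs xs is) = W * \<tau> (s, prodker (tens \<phi>s) hs)"
    by (rule state_scale[OF st P])
  moreover have "\<tau> (Aword s \<psi>s hs) = \<tau> (s, prodker (tens \<phi>s) hs)"
    by (rule Aword_state[OF st l\<phi>' lh l\<psi> c\<phi> hL ag])
  ultimately show ?thesis using A1 unfolding Asg_def hs_def \<psi>s_def W_def by simp
qed

lemma alg_from_core:
  fixes \<tau>1 \<tau>2 :: "('z::euclidean_space) mterm \<Rightarrow> complex"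
  assumes "\<forall>s f. length s = length (fst a) \<longrightarrow> f \<in> Fsp r (length (fst a)) \<longrightarrow> \<tau>1 (s, f) = \<tau>2 (s, f)"
    and "in_alg r a"
  shows "\<tau>1 a = \<tau>2 a"
proof -
  have "\<tau>1 (fst a, snd a) = \<tau>2 (fst a, snd a)" using assms unfolding in_alg_def by blast
  then show ?thesis by simp
qed

theorem proposition3p1:
  fixes r :: nat and Q :: "real \<Rightarrow> real \<Rightarrow> op2"
    and \<tau>1 \<tau>2 :: "('z::euclidean_space) mterm \<Rightarrow> complex"
  assumes "QYB r Q"
    and "mcr_state r Q \<tau>1" and "mcr_cont r \<tau>1"
    and "mcr_state r Q \<tau>2" and "mcr_cont r \<tau>2"
  shows "((\<forall>m n \<phi>s gs. 1 \<le> m + n \<longrightarrow> length \<phi>s = m + n \<longrightarrow> length gs = m + n \<longrightarrow>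
              (\<forall>\<phi>\<in>set \<phi>s. Cc1 r \<phi>) \<longrightarrow> (\<forall>g\<in>set gs. L2 g) \<longrightarrow>
              \<tau>1 (Aword (replicate m True @ replicate n False) \<phi>s gs)
            = \<tau>2 (Aword (replicate m True @ replicate n False) \<phi>s gs))
          \<longrightarrow> (\<forall>a. in_alg r a \<longrightarrow> \<tau>1 a = \<tau>2 a))
       \<and> ((\<forall>n \<phi>s gs. 1 \<le> n \<longrightarrow> length \<phi>s = n \<longrightarrow> length gs = n \<longrightarrow>
              (\<forall>\<phi>\<in>set \<phi>s. Cc1_real r \<phi>) \<longrightarrow> (\<forall>g\<in>set gs. L2 g) \<longrightarrow>
              tauA \<tau>1 (Bword \<phi>s gs) = tauA \<tau>2 (Bword \<phi>s gs))
          \<longrightarrow> (\<forall>a. in_alg r a \<longrightarrow> \<tau>1 a = \<tau>2 a))"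
proof (intro conjI impI allI)
  fix a :: "'z mterm"
  assume HA: "\<forall>m n \<phi>s gs. 1 \<le> m + n \<longrightarrow> length \<phi>s = m + n \<longrightarrow> length gs = m + n \<longrightarrow>
              (\<forall>\<phi>\<in>set \<phi>s. Cc1 r \<phi>) \<longrightarrow> (\<forall>g\<in>set gs. L2 g) \<longrightarrow>
              \<tau>1 (Aword (replicate m True @ replicate n False) \<phi>s gs)
            = \<tau>2 (Aword (replicate m True @ replicate n False) \<phi>s gs)"
    and a: "in_alg r a"
  have HN: "\<tau>1 (Aword (replicate m True @ replicate n False) \<phi>s gs)
            = \<tau>2 (Aword (replicate m True @ replicate n False) \<phi>s gs)"
    if "1 \<le> m + n" "length \<phi>s = m + n" "length gs = m + n" "\<forall>\<phi>\<in>set \<phi>s. Cc1_real r \<phi>" "\<forall>g\<in>set gs. L2 g"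
    for m n \<phi>s and gs :: "('z \<Rightarrow> complex) list"
  proof -
    have "\<forall>\<phi>\<in>set \<phi>s. Cc1 r \<phi>" using that(4) unfolding Cc1_real_def by blast
    then show ?thesis using HA that by blast
  qed
  show "\<tau>1 a = \<tau>2 a"
    by (rule alg_from_core[OF core[OF assms HN] a])
next
  fix a :: "'z mterm"
  assume HB: "\<forall>n \<phi>s gs. 1 \<le> n \<longrightarrow> length \<phi>s = n \<longrightarrow> length gs = n \<longrightarrow>
              (\<forall>\<phi>\<in>set \<phi>s. Cc1_real r \<phi>) \<longrightarrow> (\<forall>g\<in>set gs. L2 g) \<longrightarrow>
              tauA \<tau>1 (Bword \<phi>s gs) = tauA \<tau>2 (Bword \<phi>s gs)"
    and a: "in_alg r a"
  have HN: "\<tau>1 (Aword (replicate m True @ replicate n False) \<phi>s gs)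
            = \<tau>2 (Aword (replicate m True @ replicate n False) \<phi>s gs)"
    if mn: "1 \<le> m + n" and l\<phi>: "length \<phi>s = m + n" and lg: "length gs = m + n"
      and r\<phi>: "\<forall>\<phi>\<in>set \<phi>s. Cc1_real r \<phi>" and gL: "\<forall>g\<in>set gs. L2 g"
    for m n \<phi>s and gs :: "('z \<Rightarrow> complex) list"
  proof -
    define N where "N = m + n"
    define s0 where "s0 = replicate m True @ replicate n False"
    have ls0: "length s0 = N" unfolding s0_def N_def by simp
    define gs0 where "gs0 = selg s0 gs"
    have lg0: "length gs0 = N" using lg ls0 N_def unfolding gs0_def by simp
    have gL0: "\<forall>g\<in>set gs0. L2 g" unfolding gs0_def by (rule L2_selg[OF gL])
    define F where "F s = \<tau>1 (Asg s \<phi>s gs0) - \<tau>2 (Asg s \<phi>s gs0)" for s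
    have "F s0 = 0"
    proof (rule extract_signs[of N F s0])
      fix cs :: "complex list" assume lc: "length cs = N" and cs: "set cs \<subseteq> {1, \<i>}"
      have lsc: "length (scl cs gs0) = N" using lc lg0 by simp
      have Lsc: "\<forall>g\<in>set (scl cs gs0). L2 g" by (rule L2_scl[OF gL0])
      have B: "tauA \<tau>1 (Bword \<phi>s (scl cs gs0)) = tauA \<tau>2 (Bword \<phi>s (scl cs gs0))"
        using HB mn l\<phi> lsc Lsc r\<phi> N_def by simp
      have E: "tauA \<tau>j (Bword \<phi>s (scl cs gs0)) = (\<Sum>s\<leftarrow>sgl N. prod_list (wl s cs) * \<tau>j (Asg s \<phi>s gs0))"
        if stj: "mcr_state r Q \<tau>j" for \<tau>j :: "'z mterm \<Rightarrow> complex"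
      proof -
        have "tauA \<tau>j (Bword \<phi>s (scl cs gs0)) = (\<Sum>s\<leftarrow>sgl N. \<tau>j (Asg s \<phi>s (scl cs gs0)))"
          using Bword_sgl[of "scl cs gs0" \<phi>s] lsc l\<phi> N_def by (simp add: tauA_map)
        also have "\<dots> = (\<Sum>s\<leftarrow>sgl N. prod_list (wl s cs) * \<tau>j (Asg s \<phi>s gs0))"
        proof (rule arg_cong[where f=sum_list], rule map_cong[OF refl])
          fix s assume "s \<in> set (sgl N)"
          then have "length s = N" by (rule sgl_length)
          then show "\<tau>j (Asg s \<phi>s (scl cs gs0)) = prod_list (wl s cs) * \<tau>j (Asg s \<phi>s gs0)"
            by (rule Asg_scale[OF stj _ _ lg0 lc r\<phi> gL0]) (use l\<phi> N_def in simp)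
        qed
        finally show ?thesis .
      qed
      have "(\<Sum>s\<leftarrow>sgl N. prod_list (wl s cs) * F s)
          = (\<Sum>s\<leftarrow>sgl N. prod_list (wl s cs) * \<tau>1 (Asg s \<phi>s gs0)) - (\<Sum>s\<leftarrow>sgl N. prod_list (wl s cs) * \<tau>2 (Asg s \<phi>s gs0))"
        unfolding F_def by (simp add: right_diff_distrib sum_list_subtractf)
      also have "\<dots> = 0" using B E[OF assms(2)] E[OF assms(4)] by simp
      finally show "(\<Sum>s\<leftarrow>sgl N. prod_list (wl s cs) * F s) = 0" .
    next
      show "s0 \<in> set (sgl N)" by (rule set_sgl[OF ls0])
    qed
    then have eq: "\<tau>1 (Asg s0 \<phi>s gs0) = \<tau>2 (Asg s0 \<phi>s gs0)" unfolding F_def by simp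
    have As: "Asg s0 \<phi>s gs0 = Aword s0 (sel\<phi> s0 \<phi>s) gs"
      unfolding Asg_def gs0_def using selg_selg[of gs s0] lg ls0 N_def by simp
    have c\<phi>: "\<forall>\<phi>\<in>set \<phi>s. Cc1 r \<phi>" using r\<phi> unfolding Cc1_real_def by blast
    have l1: "length \<phi>s = length s0" and l2: "length gs = length s0" and l3: "length (sel\<phi> s0 \<phi>s) = length s0"
      using l\<phi> lg ls0 N_def by simp_all
    have ag: "\<forall>k<length s0. \<forall>y j. j < r \<longrightarrow> (sel\<phi> s0 \<phi>s ! k) y j = (\<phi>s ! k) y j"
      by (rule sel\<phi>_agree[OF l1 r\<phi>])
    have ag0: "\<forall>k<length s0. \<forall>y j. j < r \<longrightarrow> (\<phi>s ! k) y j = (\<phi>s ! k) y j" by simp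
    have X: "\<tau>j (Aword s0 \<phi>s gs) = \<tau>j (Asg s0 \<phi>s gs0)" if stj: "mcr_state r Q \<tau>j" for \<tau>j :: "'z mterm \<Rightarrow> complex"
      using Aword_state[OF stj l1 l2 l1 c\<phi> gL ag0] Aword_state[OF stj l1 l2 l3 c\<phi> gL ag] As by simp
    show ?thesis using eq X[OF assms(2)] X[OF assms(4)] unfolding s0_def by simp
  qed
  show "\<tau>1 a = \<tau>2 a"
    by (rule alg_from_core[OF core[OF assms HN] a])
qed

end
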